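(* Let $m$ be an integer and $\alpha\in(\frac12,\frac23)$. For an integer $N\ge 2$ let $v=e^{\pi i/N}$, $q^{1/8}=e^{\pi i/(4N)}$ (so $q^{mj^2/8}=\exp(\pi i m j^2/(4N))$), $\{n\}=v^n-v^{-n}$, $A(j,k)=\{j-k\}\{j+k\}$, $S(k,l)=\prod_{k\le n\le l}\{n\}$, and for $0\le l<j<N/2$ $$D_1(j,l)=\Big(\frac{mj}{2}+\frac{v^j+v^{-j}}{\{j\}}+2\{2j\}\sum_{k=1}^l\frac{1}{A(j,k)}\Big)S(j-l,j+l).$$ Let $F_N=\big(\prod_{r=1}^{\lfloor 5N/6\rfloor}2\sin\frac{r\pi}{N}\big)\big/\big(\prod_{r=1}^{\lfloor N/6\rfloor-1}2\sin\frac{r\pi}{N}\big)$. Then, as $N\to\infty$, $$\sum_{\substack{1\le j\le N/2-1\\ N-j+1\ \text{even}}}\ \sum_{l=0}^{j-1} q^{mj^2/8}D_1(j,l) = O\big(N^{3\alpha}F_N\big).$$ *)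

theory Defs
  imports "HOL-Analysis.Analysis" "HOL-Library.Landau_Symbols"
begin

definition vv :: "nat \<Rightarrow> complex" where
  "vv N = exp (pi * \<i> / of_nat N)"

definition br :: "nat \<Rightarrow> int \<Rightarrow> complex" where
  "br N n = vv N powi n - vv N powi (- n)"

definition AA :: "nat \<Rightarrow> int \<Rightarrow> int \<Rightarrow> complex" where
  "AA N j k = br N (j - k) * br N (j + k)"

definition SS :: "nat \<Rightarrow> int \<Rightarrow> int \<Rightarrow> complex" where
  "SS N k l = (\<Prod>n\<in>{k..l}. br N n)"

definition D1 :: "int \<Rightarrow> nat \<Rightarrow> int \<Rightarrow> int \<Rightarrow> complex" where
  "D1 m N j l =
     (of_int m * of_int j / 2 + (vv N powi j + vv N powi (- j)) / br N j
      + 2 * br N (2 * j) * (\<Sum>k\<in>{1..l}. 1 / AA N j k))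
     * SS N (j - l) (j + l)"

definition qterm :: "int \<Rightarrow> nat \<Rightarrow> int \<Rightarrow> complex" where
  "qterm m N j = exp (pi * \<i> * of_int m * of_int (j ^ 2) / (4 * of_nat N))"

definition FF :: "nat \<Rightarrow> real" where
  "FF N = (\<Prod>r\<in>{1..(5 * N) div 6}. 2 * sin (real r * pi / real N))
          / (\<Prod>r\<in>{1..N div 6 - 1}. 2 * sin (real r * pi / real N))"

definition Ssum :: "int \<Rightarrow> nat \<Rightarrow> complex" where
  "Ssum m N = (\<Sum>j\<in>{j::int. 1 \<le> j \<and> real_of_int j \<le> real N / 2 - 1 \<and> even (int N - j + 1)}.
                 \<Sum>l\<in>{0..j-1}. qterm m N j * D1 m N j l)"

end

theory Submission
  imports Defs
begin


lemma sin_lower3: fixes t::real assumes "0 \<le> t" shows "t - t^3/6 \<le> sin t"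
proof -
  have "\<bar>sin t - (\<Sum>m<3. sin_coeff m * t ^ m)\<bar> \<le> inverse (fact 3) * \<bar>t\<bar> ^ 3"
    by (rule Maclaurin_sin_bound)
  moreover have "(\<Sum>m<3. sin_coeff m * t ^ m) = t"
    by (simp add: numeral_3_eq_3 sin_coeff_def)
  ultimately show ?thesis using assms by (simp add: fact_numeral abs_if split: if_splits)
qed

lemma cos_lower2: fixes t::real shows "1 - t^2/2 \<le> cos t"
proof -
  have "cos t = cos (2*(t/2))" by simp
  also have "\<dots> = 1 - 2 * sin (t/2)^2" by (rule cos_double_sin)
  finally have e: "cos t = 1 - 2 * sin (t/2)^2" .
  have "sin (t/2)^2 \<le> (t/2)^2"
    using abs_sin_x_le_abs_x[of "t/2"] by (metis abs_le_square_iff)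
  then show ?thesis using e by (simp add: power_divide)
qed

lemma sqrt3_bounds: "1.7 \<le> sqrt (3::real)" "sqrt (3::real) \<le> 1.8"
proof -
  show "1.7 \<le> sqrt (3::real)" by (rule real_le_rsqrt) (simp add: power2_eq_square)
  have "sqrt (3::real) \<le> sqrt (1.8^2)" by (subst real_sqrt_le_iff) (simp add: power2_eq_square)
  then show "sqrt (3::real) \<le> 1.8" by simp
qed



definition sN :: "nat \<Rightarrow> real \<Rightarrow> real" where
  "sN N x = 2 * sin (x * pi / real N)"

lemma abs_sin_diff: fixes u v :: real shows "\<bar>sin u - sin v\<bar> \<le> \<bar>u - v\<bar>"
proof -
  have "\<bar>sin u - sin v\<bar> = 2 * \<bar>sin ((u - v) / 2)\<bar> * \<bar>cos ((u + v) / 2)\<bar>"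
    by (simp add: sin_diff_sin abs_mult)
  also have "\<dots> \<le> 2 * \<bar>(u - v)/2\<bar> * 1"
    by (intro mult_mono abs_sin_x_le_abs_x) auto
  finally show ?thesis by simp
qed

lemma sin_ge_between: fixes u v :: real
  assumes "0 \<le> v" "v \<le> u" "u \<le> pi - v" shows "sin v \<le> sin u"
proof (cases "u \<le> pi/2")
  case True then show ?thesis using assms by (intro sin_monotone_2pi_le) auto
next
  case False
  have "sin v \<le> sin (pi - u)" using assms False by (intro sin_monotone_2pi_le) auto
  then show ?thesis by simp
qed

lemma sin_le_outside: fixes u v :: real
  assumes "0 \<le> u" "u \<le> pi" "v \<le> pi/2" "u \<le> v \<or> pi - v \<le> u" shows "sin u \<le> sin v"
  using assms(4)
proof
  assume "u \<le> v" then show ?thesis using assms by (intro sin_monotone_2pi_le) auto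
next
  assume h: "pi - v \<le> u"
  have "sin (pi - u) \<le> sin v" using assms h by (intro sin_monotone_2pi_le) auto
  then show ?thesis by simp
qed

lemma sN_sym: "N > 0 \<Longrightarrow> sN N (real N - x) = sN N x"
proof -
  assume "N > 0"
  then have "(real N - x) * pi / real N = pi - x * pi / real N" by (simp add: field_simps)
  then show ?thesis unfolding sN_def by simp
qed

lemma sN_abs_le2: "\<bar>sN N x\<bar> \<le> 2"
  unfolding sN_def by (simp add: abs_mult)

lemma sN_lip: assumes "N > 0" shows "\<bar>sN N x - sN N y\<bar> \<le> 2 * pi * \<bar>x - y\<bar> / real N"
proof -
  have Np: "real N > 0" using assms by simp
  have e: "sN N x - sN N y = 2 * (sin (x * pi / real N) - sin (y * pi / real N))"
    unfolding sN_def by (simp add: right_diff_distrib)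
  have "\<bar>sin (x * pi / real N) - sin (y * pi / real N)\<bar> \<le> \<bar>x * pi / real N - y * pi / real N\<bar>"
    by (rule abs_sin_diff)
  also have "x * pi / real N - y * pi / real N = (x - y) * (pi / real N)"
    by (simp add: left_diff_distrib diff_divide_distrib)
  also have "\<bar>(x - y) * (pi / real N)\<bar> = \<bar>x - y\<bar> * (pi / real N)"
    using Np by (simp add: abs_mult)
  finally have "\<bar>sin (x * pi / real N) - sin (y * pi / real N)\<bar> \<le> \<bar>x - y\<bar> * (pi / real N)" .
  then have "2 * \<bar>sin (x * pi / real N) - sin (y * pi / real N)\<bar> \<le> 2 * (\<bar>x - y\<bar> * (pi / real N))"
    by simp
  moreover have "\<bar>sN N x - sN N y\<bar> = 2 * \<bar>sin (x * pi / real N) - sin (y * pi / real N)\<bar>"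
    by (simp only: e abs_mult abs_numeral)
  moreover have "2 * (\<bar>x - y\<bar> * (pi / real N)) = 2 * pi * \<bar>x - y\<bar> / real N" by (simp add: mult_ac)
  ultimately show ?thesis by linarith
qed

lemma sN_pos: assumes "0 < x" "x < real N" shows "0 < sN N x"
proof -
  have N: "real N > 0" using assms by linarith
  have "0 < x * pi / real N" using assms N by simp
  moreover have "x * pi / real N < pi" using assms N by (simp add: field_simps)
  ultimately show ?thesis unfolding sN_def using sin_gt_zero by simp
qed

lemma sN_nonneg: assumes "0 \<le> x" "x \<le> real N" shows "0 \<le> sN N x"
proof (cases "N = 0")
  case True then show ?thesis by (simp add: sN_def)
next
  case False
  have N: "real N > 0" using False by simp
  have "0 \<le> x * pi / real N" using assms N by simp
  moreover have "x * pi / real N \<le> pi" using assms N by (simp add: field_simps)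
  ultimately show ?thesis unfolding sN_def using sin_ge_zero by simp
qed

lemma scale_pi: assumes "real N > 0" shows "(c * real N) * pi / real N = c * pi"
  using assms by simp

lemma sN_le1: assumes N: "N > 0" and "0 \<le> x" "x \<le> real N"
  and "x \<le> real N / 6 \<or> 5 * real N / 6 \<le> x" shows "sN N x \<le> 1"
proof -
  have Np: "real N > 0" using N by simp
  let ?u = "x * pi / real N"
  have "sin ?u \<le> sin (pi/6)"
  proof (rule sin_le_outside)
    show "0 \<le> ?u" using assms Np by simp
    show "?u \<le> pi" using assms Np by (simp add: field_simps)
    show "pi/6 \<le> pi/2" by simp
    show "?u \<le> pi / 6 \<or> pi - pi / 6 \<le> ?u"
      using assms(4) Np by (auto simp: field_simps)
  qed
  then show ?thesis unfolding sN_def by (simp add: sin_30)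
qed

lemma sN_ge1: assumes N: "N > 0" and "real N / 6 \<le> x" "x \<le> 5 * real N / 6" shows "1 \<le> sN N x"
proof -
  have Np: "real N > 0" using N by simp
  let ?u = "x * pi / real N"
  have "sin (pi/6) \<le> sin ?u"
    using assms Np by (intro sin_ge_between) (auto simp: field_simps)
  then show ?thesis unfolding sN_def by (simp add: sin_30)
qed

lemma sin_pi6_plus: fixes t::real assumes "0 \<le> t" "t \<le> 1/2"
  shows "1 + t \<le> 2 * sin (pi/6 + t)" and "2 * sin (pi/6 - t) \<le> 1 - t"
proof -
  have c: "1 - t^2/2 \<le> cos t" by (rule cos_lower2)
  have s: "t - t^3/6 \<le> sin t" using assms by (intro sin_lower3)
  have cu: "cos t \<le> 1" by simp
  have s3: "1.7 \<le> sqrt (3::real)" "sqrt (3::real) \<le> 1.8" by (rule sqrt3_bounds)+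
  have tt: "t*t \<le> 1/2*(1/2)" using assms by (intro mult_mono) auto
  have t3: "t^3 \<le> t/4"
  proof -
    have "t * (t*t) \<le> t * (1/2*(1/2))" using tt assms by (intro mult_left_mono) auto
    then show ?thesis by (simp add: power3_eq_cube)
  qed
  have t2: "t^2 \<le> t/2"
  proof -
    have "t * t \<le> t * (1/2)" using assms by (intro mult_left_mono) auto
    then show ?thesis by (simp add: power2_eq_square)
  qed
  have e1: "2 * sin (pi/6 + t) = cos t + sqrt 3 * sin t"
    by (simp add: sin_add sin_30 cos_30)
  have e2: "2 * sin (pi/6 - t) = cos t - sqrt 3 * sin t"
    by (simp add: sin_diff sin_30 cos_30)
  have st: "sqrt 3 * (t - t^3/6) \<le> sqrt 3 * sin t" using s by simp
  have "1 + t \<le> 1 - t^2/2 + sqrt 3 * (t - t^3/6)"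
  proof -
    have "sqrt 3 * (t - t^3/6) \<ge> 1.7 * (t - t^3/6)"
      using s3 t3 assms by (intro mult_right_mono) auto
    moreover have "1.7 * (t - t^3/6) = 17/10*t - 17/60*t^3" by (simp add: field_simps)
    ultimately show ?thesis using t2 t3 assms by linarith
  qed
  then show "1 + t \<le> 2 * sin (pi/6 + t)" using e1 c st by linarith
  have "cos t - sqrt 3 * sin t \<le> 1 - sqrt 3 * (t - t^3/6)" using cu st by linarith
  also have "\<dots> \<le> 1 - t"
  proof -
    have "sqrt 3 * (t - t^3/6) \<ge> 1.7 * (t - t^3/6)"
      using s3 t3 assms by (intro mult_right_mono) auto
    moreover have "1.7 * (t - t^3/6) = 17/10*t - 17/60*t^3" by (simp add: field_simps)
    ultimately show ?thesis using t3 assms by linarith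
  qed
  finally show "2 * sin (pi/6 - t) \<le> 1 - t" using e2 by simp
qed

lemma sN_deep_mid: assumes N: "N > 0" and d: "0 \<le> d" "d * pi / real N \<le> 1/2"
  and x: "real N / 6 + d \<le> x" "x \<le> 5 * real N / 6 - d"
  shows "1 + d * pi / real N \<le> sN N x"
proof -
  have Np: "real N > 0" using N by simp
  let ?t = "d * pi / real N"
  have t0: "0 \<le> ?t" using d Np by simp
  have "sin (pi/6 + ?t) \<le> sin (x * pi / real N)"
  proof (rule sin_ge_between)
    show "0 \<le> pi / 6 + ?t" using t0 by simp
    have "(real N / 6 + d) * pi / real N \<le> x * pi / real N"
      using x Np by (intro divide_right_mono mult_right_mono) auto
    then show "pi / 6 + ?t \<le> x * pi / real N" using Np by (simp add: field_simps)
    have "x * pi / real N \<le> (5 * real N / 6 - d) * pi / real N"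
      using x Np by (intro divide_right_mono mult_right_mono) auto
    then show "x * pi / real N \<le> pi - (pi / 6 + ?t)" using Np by (simp add: field_simps)
  qed
  with sin_pi6_plus(1)[OF t0 d(2)] show ?thesis unfolding sN_def by linarith
qed

lemma sN_deep_small: assumes N: "N > 0" and d: "0 \<le> d" "d * pi / real N \<le> 1/2"
  and x: "0 \<le> x" "x \<le> real N" "x \<le> real N / 6 - d \<or> 5 * real N / 6 + d \<le> x"
  shows "sN N x \<le> 1 - d * pi / real N"
proof -
  have Np: "real N > 0" using N by simp
  let ?t = "d * pi / real N"
  have t0: "0 \<le> ?t" using d Np by simp
  have "sin (x * pi / real N) \<le> sin (pi/6 - ?t)"
  proof (rule sin_le_outside)
    show "0 \<le> x * pi / real N" using x Np by simp
    show "x * pi / real N \<le> pi" using x Np by (simp add: field_simps)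
    show "pi / 6 - ?t \<le> pi / 2" using t0 pi_gt_zero by linarith
    show "x * pi / real N \<le> pi / 6 - ?t \<or> pi - (pi / 6 - ?t) \<le> x * pi / real N"
      using x(3)
    proof
      assume "x \<le> real N / 6 - d"
      then have "x * pi / real N \<le> (real N / 6 - d) * pi / real N"
        using Np by (intro divide_right_mono mult_right_mono) auto
      then show ?thesis using Np by (simp add: field_simps)
    next
      assume "5 * real N / 6 + d \<le> x"
      then have "(5 * real N / 6 + d) * pi / real N \<le> x * pi / real N"
        using Np by (intro divide_right_mono mult_right_mono) auto
      then show ?thesis using Np by (simp add: field_simps)
    qed
  qed
  with sin_pi6_plus(2)[OF t0 d(2)] show ?thesis unfolding sN_def by linarith
qed



lemma vv_powi: assumes "N > 0"
  shows "vv N powi n = exp (\<i> * complex_of_real (real_of_int n * pi / real N))"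
proof -
  have "vv N powi n = exp (of_int n * (complex_of_real pi * \<i> / of_nat N))"
    unfolding vv_def by (rule exp_power_int)
  also have "of_int n * (complex_of_real pi * \<i> / of_nat N) = \<i> * complex_of_real (real_of_int n * pi / real N)"
    by (simp add: field_simps)
  finally show ?thesis .
qed

lemma exp_i_minus: "exp (\<i> * complex_of_real y) - exp (\<i> * complex_of_real (- y)) = \<i> * complex_of_real (2 * sin y)"
  by (simp add: exp_Euler exp_minus_Euler cos_of_real sin_of_real)

lemma exp_i_plus: "exp (\<i> * complex_of_real y) + exp (\<i> * complex_of_real (- y)) = complex_of_real (2 * cos y)"
  by (simp add: exp_Euler exp_minus_Euler cos_of_real sin_of_real)

lemma div_i: fixes a b :: complex shows "a / (\<i> * b) = - \<i> * (a / b)"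
  by (cases "b = 0") (auto simp: field_simps)

lemma br_eq: assumes "N > 0" shows "br N n = \<i> * complex_of_real (sN N (of_int n))"
proof -
  have "br N n = exp (\<i> * complex_of_real (real_of_int n * pi / real N))
      - exp (\<i> * complex_of_real (- (real_of_int n * pi / real N)))"
    unfolding br_def vv_powi[OF assms] by simp
  also have "\<dots> = \<i> * complex_of_real (sN N (of_int n))"
    unfolding exp_i_minus sN_def by simp
  finally show ?thesis .
qed

lemma vpair_eq: assumes "N > 0"
  shows "vv N powi j + vv N powi (- j) = complex_of_real (2 * cos (real_of_int j * pi / real N))"
proof -
  have "vv N powi j + vv N powi (- j) = exp (\<i> * complex_of_real (real_of_int j * pi / real N))
      + exp (\<i> * complex_of_real (- (real_of_int j * pi / real N)))"
    unfolding vv_powi[OF assms] by simp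
  then show ?thesis unfolding exp_i_plus .
qed

definition QQ :: "nat \<Rightarrow> int \<Rightarrow> int \<Rightarrow> real" where
  "QQ N a b = (\<Prod>n\<in>{a..b}. sN N (of_int n))"

lemma SS_eq: assumes "N > 0" "a \<le> b + 1"
  shows "SS N a b = \<i> ^ nat (b - a + 1) * complex_of_real (QQ N a b)"
proof -
  have "SS N a b = (\<Prod>n\<in>{a..b}. \<i> * complex_of_real (sN N (of_int n)))"
    unfolding SS_def using br_eq[OF assms(1)] by simp
  also have "\<dots> = \<i> ^ card {a..b} * (\<Prod>n\<in>{a..b}. complex_of_real (sN N (of_int n)))"
    by (simp add: prod.distrib)
  also have "\<dots> = \<i> ^ nat (b - a + 1) * complex_of_real (QQ N a b)"
    unfolding QQ_def by simp
  finally show ?thesis .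
qed

definition cc :: "nat \<Rightarrow> int \<Rightarrow> int \<Rightarrow> real" where
  "cc N j l = cos (real_of_int j * pi / real N) / sin (real_of_int j * pi / real N)
     + (\<Sum>k\<in>{1..l}. sin (real_of_int (2*j) * pi / real N)
          / (sin (real_of_int (j - k) * pi / real N) * sin (real_of_int (j + k) * pi / real N)))"

lemma bracket_eq: assumes N: "N > 0"
  shows "of_int m * of_int j / 2 + (vv N powi j + vv N powi (- j)) / br N j
      + 2 * br N (2 * j) * (\<Sum>k\<in>{1..l}. 1 / AA N j k)
    = of_int m * of_int j / 2 - \<i> * complex_of_real (cc N j l)"
proof -
  define th where "th = pi / real N"
  have sx: "\<And>x. sN N x = 2 * sin (x * th)" unfolding sN_def th_def by simp
  have th2: "\<And>x. x * pi / real N = x * th" unfolding th_def by simp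
  have t1: "(vv N powi j + vv N powi (- j)) / br N j
      = - \<i> * complex_of_real (cos (real_of_int j * th) / sin (real_of_int j * th))"
    unfolding vpair_eq[OF N] br_eq[OF N] sx th2 div_i
    by simp
  have t2: "2 * br N (2 * j) * (1 / AA N j k)
      = - \<i> * complex_of_real (sin (real_of_int (2*j) * th)
          / (sin (real_of_int (j - k) * th) * sin (real_of_int (j + k) * th)))" for k
    unfolding AA_def br_eq[OF N] sx
    by (simp add: field_simps)
  have "2 * br N (2 * j) * (\<Sum>k\<in>{1..l}. 1 / AA N j k) = (\<Sum>k\<in>{1..l}. 2 * br N (2 * j) * (1 / AA N j k))"
    by (simp add: sum_distrib_left)
  also have "\<dots> = - \<i> * complex_of_real (\<Sum>k\<in>{1..l}. sin (real_of_int (2*j) * th)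
          / (sin (real_of_int (j - k) * th) * sin (real_of_int (j + k) * th)))"
    unfolding t2 by (simp add: sum_distrib_left)
  finally have t3: "2 * br N (2 * j) * (\<Sum>k\<in>{1..l}. 1 / AA N j k) = \<dots>" .
  show ?thesis unfolding t1 t3 cc_def th2 by (simp add: algebra_simps)
qed



lemma norm_qterm: "norm (qterm m N j) = 1"
  unfolding qterm_def by (simp add: norm_exp_eq_Re)

lemma i_pow_odd: assumes "0 \<le> l" shows "\<i> ^ nat (2 * l + 1) = \<i> * (-1) ^ nat l"
proof -
  have "nat (2 * l + 1) = Suc (2 * nat l)" using assms by simp
  then show ?thesis by (simp add: power_mult)
qed

lemma QQ_nonneg: assumes "0 \<le> a" "b \<le> int N" shows "0 \<le> QQ N a b"
  unfolding QQ_def using assms by (intro prod_nonneg ballI sN_nonneg) auto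

lemma D1_eq: assumes N: "N > 0" and l: "0 \<le> l"
  shows "D1 m N j l = \<i> * complex_of_real (real_of_int m * real_of_int j / 2 * ((-1) ^ nat l * QQ N (j - l) (j + l)))
     + complex_of_real ((-1) ^ nat l * cc N j l * QQ N (j - l) (j + l))"
proof -
  have "D1 m N j l = (of_int m * of_int j / 2 - \<i> * complex_of_real (cc N j l))
      * (\<i> * (-1) ^ nat l * complex_of_real (QQ N (j - l) (j + l)))"
  proof -
    have ss: "SS N (j - l) (j + l) = \<i> ^ nat ((j + l) - (j - l) + 1) * complex_of_real (QQ N (j - l) (j + l))"
      using l by (intro SS_eq[OF N]) auto
    have "(j + l) - (j - l) + 1 = 2 * l + 1" by simp
    then show ?thesis unfolding D1_def bracket_eq[OF N] ss using l by (simp add: i_pow_odd)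
  qed
  then show ?thesis by (simp add: algebra_simps)
qed

lemma norm_i_real: "norm (\<i> * complex_of_real x) = \<bar>x\<bar>"
  by (simp add: norm_mult)

lemma inner_bound: assumes N: "N > 0" and j: "1 \<le> j" "2 * j \<le> int N"
  shows "norm (\<Sum>l\<in>{0..j-1}. qterm m N j * D1 m N j l)
    \<le> \<bar>real_of_int m\<bar> * real_of_int j / 2 * \<bar>\<Sum>l\<in>{0..j-1}. (-1) ^ nat l * QQ N (j - l) (j + l)\<bar>
      + (\<Sum>l\<in>{0..j-1}. \<bar>cc N j l\<bar> * QQ N (j - l) (j + l))"
proof -
  let ?U = "\<Sum>l\<in>{0..j-1}. (-1) ^ nat l * QQ N (j - l) (j + l)"
  let ?V = "\<Sum>l\<in>{0..j-1}. (-1) ^ nat l * cc N j l * QQ N (j - l) (j + l)"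
  have "(\<Sum>l\<in>{0..j-1}. qterm m N j * D1 m N j l) = qterm m N j * (\<Sum>l\<in>{0..j-1}. D1 m N j l)"
    by (simp add: sum_distrib_left)
  also have "(\<Sum>l\<in>{0..j-1}. D1 m N j l)
     = \<i> * complex_of_real (real_of_int m * real_of_int j / 2 * ?U) + complex_of_real ?V"
    by (simp add: D1_eq[OF N] sum.distrib sum_distrib_left)
  finally have e: "(\<Sum>l\<in>{0..j-1}. qterm m N j * D1 m N j l) = qterm m N j *
      (\<i> * complex_of_real (real_of_int m * real_of_int j / 2 * ?U) + complex_of_real ?V)" .
  have "norm (\<i> * complex_of_real (real_of_int m * real_of_int j / 2 * ?U) + complex_of_real ?V)
      \<le> norm (\<i> * complex_of_real (real_of_int m * real_of_int j / 2 * ?U)) + norm (complex_of_real ?V)"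
    by (rule norm_triangle_ineq)
  also have "norm (\<i> * complex_of_real (real_of_int m * real_of_int j / 2 * ?U))
     = \<bar>real_of_int m * real_of_int j / 2 * ?U\<bar>"
    by (rule norm_i_real)
  also have "\<bar>real_of_int m * real_of_int j / 2 * ?U\<bar> = \<bar>real_of_int m\<bar> * real_of_int j / 2 * \<bar>?U\<bar>"
    using j by (simp add: abs_mult)
  also have "norm (complex_of_real ?V) = \<bar>?V\<bar>" by (rule norm_of_real)
  also have "\<bar>?V\<bar> \<le> (\<Sum>l\<in>{0..j-1}. \<bar>(-1) ^ nat l * cc N j l * QQ N (j - l) (j + l)\<bar>)"
    by (rule sum_abs)
  also have "\<dots> = (\<Sum>l\<in>{0..j-1}. \<bar>cc N j l\<bar> * QQ N (j - l) (j + l))"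
  proof (rule sum.cong)
    fix l assume "l \<in> {0..j-1}"
    then have "0 \<le> QQ N (j - l) (j + l)" using j by (intro QQ_nonneg) auto
    then show "\<bar>(-1) ^ nat l * cc N j l * QQ N (j - l) (j + l)\<bar> = \<bar>cc N j l\<bar> * QQ N (j - l) (j + l)"
      by (simp add: abs_mult)
  qed simp
  finally show ?thesis unfolding e by (simp add: norm_mult norm_qterm)
qed



lemma sin_quarter: fixes u :: real assumes "pi/12 \<le> u" "u \<le> 11*pi/12" shows "1/4 \<le> sin u"
proof -
  have "sin (pi/12) \<le> sin u" using assms by (intro sin_ge_between) (auto simp: field_simps)
  moreover have "pi/12 - (pi/12)^3/6 \<le> sin (pi/12)" by (rule sin_lower3) simp
  moreover have "(pi/12)^3 \<le> (1/3)^3" using pi_less_4 by (intro power_mono) auto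
  moreover have "1/4 + 1/162 \<le> pi/12" using pi_approx(1) by simp
  ultimately show ?thesis by (simp add: power_divide) 
qed

lemma sN_ge_half: assumes N: "N > 0" "real N / 12 \<le> x" "x \<le> 11 * real N / 12" shows "1/2 \<le> sN N x"
proof -
  have Np: "real N > 0" using N by simp
  have "1/4 \<le> sin (x * pi / real N)"
  proof (rule sin_quarter)
    have "(real N / 12) * pi / real N \<le> x * pi / real N"
      using N by (intro divide_right_mono mult_right_mono) auto
    then show "pi / 12 \<le> x * pi / real N" using Np by simp
    have "x * pi / real N \<le> (11 * real N / 12) * pi / real N"
      using N by (intro divide_right_mono mult_right_mono) auto
    then show "x * pi / real N \<le> 11 * pi / 12" using Np by simp
  qed
  then show ?thesis unfolding sN_def by simp
qed

definition n1 :: "nat \<Rightarrow> int" where "n1 N = int (N div 6)"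
definition n2 :: "nat \<Rightarrow> int" where "n2 N = int ((5 * N) div 6)"

lemma n1_bounds: "real_of_int (n1 N) \<le> real N / 6" "real N / 6 < real_of_int (n1 N) + 1"
proof -
  have a: "6 * (N div 6) \<le> N" "N < 6 * (N div 6) + 6" by simp_all
  show "real_of_int (n1 N) \<le> real N / 6" unfolding n1_def using a(1) by linarith
  show "real N / 6 < real_of_int (n1 N) + 1" unfolding n1_def using a(2) by linarith
qed

lemma n2_bounds: "real_of_int (n2 N) \<le> 5 * real N / 6" "5 * real N / 6 < real_of_int (n2 N) + 1"
proof -
  have a: "6 * ((5*N) div 6) \<le> 5*N" "5*N < 6 * ((5*N) div 6) + 6" by simp_all
  show "real_of_int (n2 N) \<le> 5 * real N / 6" unfolding n2_def using a(1) by linarith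
  show "5 * real N / 6 < real_of_int (n2 N) + 1" unfolding n2_def using a(2) by linarith
qed

lemma FF_eq: assumes N: "12 \<le> N" shows "FF N = QQ N (n1 N) (n2 N)"
proof -
  let ?f = "\<lambda>r::nat. 2 * sin (real r * pi / real N)"
  let ?A = "{1..N div 6 - 1}" and ?B = "{N div 6..(5 * N) div 6}"
  have h: "2 \<le> N div 6" using N by simp
  have un: "{1..(5 * N) div 6} = ?A \<union> ?B" using h by auto
  have dis: "?A \<inter> ?B = {}" by auto
  have pos: "0 < prod ?f ?A"
  proof (rule prod_pos)
    fix r assume r: "r \<in> ?A"
    then have "real r < real N" using h by (simp, linarith)
    moreover have "0 < real r" using r by simp
    ultimately have "0 < sN N (real r)" by (intro sN_pos)
    then show "0 < ?f r" by (simp add: sN_def)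
  qed
  have pu: "prod ?f {1..(5 * N) div 6} = prod ?f ?A * prod ?f ?B"
    unfolding un by (rule prod.union_disjoint[OF _ _ dis]) auto
  have "FF N = prod ?f ?A * prod ?f ?B / prod ?f ?A"
    unfolding FF_def pu by simp
  also have "\<dots> = prod ?f ?B" by (rule nonzero_mult_div_cancel_left) (use pos in linarith)
  also have "\<dots> = (\<Prod>n\<in>int ` ?B. sN N (real_of_int n))"
    by (subst prod.reindex) (auto simp: sN_def)
  also have "int ` ?B = {n1 N..n2 N}" unfolding n1_def n2_def by (simp add: image_int_atLeastAtMost)
  finally show ?thesis unfolding QQ_def .
qed



lemma QQ_ratio: "QQ N a b * (\<Prod>n\<in>{n1 N..n2 N} - {a..b}. sN N (of_int n))
   = QQ N (n1 N) (n2 N) * (\<Prod>n\<in>{a..b} - {n1 N..n2 N}. sN N (of_int n))"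
proof -
  let ?s = "\<lambda>n::int. sN N (of_int n)"
  let ?B = "{a..b}" and ?I = "{n1 N..n2 N}"
  have "prod ?s ?B * prod ?s (?I - ?B) = prod ?s (?B \<union> (?I - ?B))"
    by (rule prod.union_disjoint[symmetric]) auto
  also have "?B \<union> (?I - ?B) = ?I \<union> (?B - ?I)" by auto
  also have "prod ?s (?I \<union> (?B - ?I)) = prod ?s ?I * prod ?s (?B - ?I)"
    by (rule prod.union_disjoint) auto
  finally show ?thesis unfolding QQ_def .
qed

locale bigN =
  fixes N :: nat assumes N12: "12 \<le> N"
begin

lemma Npos: "N > 0" using N12 by simp

lemma n1_ge: "2 \<le> n1 N" using N12 n1_bounds[of N] by linarith

lemma n2_le: "n2 N \<le> int N - 1" using N12 n2_bounds[of N] by linarith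

lemma s_out: assumes "1 \<le> n" "n \<le> int N - 1" "n \<notin> {n1 N..n2 N}"
  shows "0 \<le> sN N (of_int n)" "sN N (of_int n) \<le> 1"
proof -
  show "0 \<le> sN N (of_int n)" using assms by (intro sN_nonneg) auto
  have "n + 1 \<le> n1 N \<or> n2 N + 1 \<le> n" using assms(3) by auto
  then have "real_of_int n + 1 \<le> real_of_int (n1 N) \<or> real_of_int (n2 N) + 1 \<le> real_of_int n"
    by (metis of_int_add of_int_le_iff of_int_1)
  then have "real_of_int n \<le> real N / 6 \<or> 5 * real N / 6 \<le> real_of_int n"
    using n1_bounds[of N] n2_bounds[of N] by linarith
  then show "sN N (of_int n) \<le> 1" using assms Npos by (intro sN_le1) auto
qed

lemma s_in: assumes "n \<in> {n1 N..n2 N}"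
  shows "1/2 \<le> sN N (of_int n)" "n \<noteq> n1 N \<Longrightarrow> 1 \<le> sN N (of_int n)"
proof -
  show "1/2 \<le> sN N (of_int n)"
    using assms n1_bounds[of N] n2_bounds[of N] N12 by (intro sN_ge_half[OF Npos]) auto
  assume "n \<noteq> n1 N"
  then have "n1 N + 1 \<le> n" using assms by auto
  then show "1 \<le> sN N (of_int n)"
    using assms n1_bounds[of N] n2_bounds[of N] by (intro sN_ge1[OF Npos]) auto
qed

lemma F_pos: "0 < QQ N (n1 N) (n2 N)"
  unfolding QQ_def
proof (rule prod_pos)
  fix n assume "n \<in> {n1 N..n2 N}"
  then have "1/2 \<le> sN N (of_int n)" by (rule s_in)
  then show "0 < sN N (of_int n)" by simp
qed

lemma Y_lower: assumes T: "T \<subseteq> {n1 N..n2 N} - {a..b}" "n1 N \<notin> T"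
  and tT: "\<And>n. n \<in> T \<Longrightarrow> 1 + t \<le> sN N (of_int n)" and t: "0 \<le> t"
  shows "(1 + t) ^ card T / 2 \<le> (\<Prod>n\<in>{n1 N..n2 N} - {a..b}. sN N (of_int n))"
proof -
  let ?s = "\<lambda>n::int. sN N (of_int n)"
  let ?A = "{n1 N..n2 N} - {a..b}"
  let ?C = "?A - T"
  have fin: "finite ?A" by simp
  have sp: "prod ?s ?A = prod ?s T * prod ?s ?C"
    using T(1) by (metis fin prod.subset_diff mult.commute)
  have pT: "(1 + t) ^ card T \<le> prod ?s T"
  proof -
    have "(\<Prod>n\<in>T. (1 + t)) \<le> prod ?s T" using tT t by (intro prod_mono) auto
    then show ?thesis by simp
  qed
  have pC: "1/2 \<le> prod ?s ?C"
  proof (cases "n1 N \<in> ?C")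
    case True
    have "prod ?s ?C = ?s (n1 N) * prod ?s (?C - {n1 N})"
      by (rule prod.remove) (use True in auto)
    moreover have "1 \<le> prod ?s (?C - {n1 N})"
      by (rule prod_ge_1) (use s_in in auto)
    moreover have "1/2 \<le> ?s (n1 N)" using True by (intro s_in) auto
    ultimately have e: "prod ?s ?C = ?s (n1 N) * prod ?s (?C - {n1 N})" and
      g1: "1 \<le> prod ?s (?C - {n1 N})" and g2: "1/2 \<le> ?s (n1 N)" by auto
    have "?s (n1 N) * 1 \<le> ?s (n1 N) * prod ?s (?C - {n1 N})"
      using g1 g2 by (intro mult_left_mono) auto
    then show ?thesis using e g2 by linarith
  next
    case False
    have "1 \<le> prod ?s ?C"
      by (rule prod_ge_1) (use s_in False in auto)
    then show ?thesis by simp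
  qed
  have "(1 + t) ^ card T / 2 = (1 + t) ^ card T * (1/2)" by simp
  also have "\<dots> \<le> prod ?s T * prod ?s ?C"
  proof (rule mult_mono)
    show "0 \<le> prod ?s T" using pT t by (meson order_trans zero_le_power add_nonneg_nonneg zero_le_one)
  qed (use pT pC in auto)
  finally show ?thesis using sp by simp
qed

lemma X_upper: assumes T: "T \<subseteq> {a..b} - {n1 N..n2 N}" and ab: "1 \<le> a" "b \<le> int N - 1"
  and tT: "\<And>n. n \<in> T \<Longrightarrow> sN N (of_int n) \<le> 1 - t" and t: "t \<le> 1"
  shows "(\<Prod>n\<in>{a..b} - {n1 N..n2 N}. sN N (of_int n)) \<le> (1 - t) ^ card T"
proof -
  let ?s = "\<lambda>n::int. sN N (of_int n)"
  let ?A = "{a..b} - {n1 N..n2 N}"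
  have fin: "finite ?A" by simp
  have sp: "prod ?s ?A = prod ?s T * prod ?s (?A - T)"
    using T by (metis fin prod.subset_diff mult.commute)
  have A: "\<And>n. n \<in> ?A \<Longrightarrow> 0 \<le> ?s n \<and> ?s n \<le> 1"
    using s_out ab by auto
  have pT: "prod ?s T \<le> (1 - t) ^ card T"
  proof -
    have "prod ?s T \<le> (\<Prod>n\<in>T. (1 - t))" using tT A T by (intro prod_mono) auto
    then show ?thesis by simp
  qed
  have pC: "prod ?s (?A - T) \<le> 1" "0 \<le> prod ?s (?A - T)"
    using A by (auto intro!: prod_le_1 prod_nonneg)
  have "0 \<le> prod ?s T" using A T by (intro prod_nonneg) auto
  then have "prod ?s T * prod ?s (?A - T) \<le> prod ?s T * 1"
    using pC by (intro mult_left_mono) auto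
  then show ?thesis using sp pT by simp
qed

lemma Q_le_general: assumes ab: "1 \<le> a" "b \<le> int N - 1"
  shows "QQ N a b \<le> 2 * QQ N (n1 N) (n2 N)"
proof -
  let ?F = "QQ N (n1 N) (n2 N)"
  let ?Y = "\<Prod>n\<in>{n1 N..n2 N} - {a..b}. sN N (of_int n)"
  let ?X = "\<Prod>n\<in>{a..b} - {n1 N..n2 N}. sN N (of_int n)"
  have Y: "1/2 \<le> ?Y" using Y_lower[of "{}" a b 0] by simp
  have X: "?X \<le> 1" using X_upper[of "{}" a b 0] ab by simp
  have e: "QQ N a b * ?Y = ?F * ?X" by (rule QQ_ratio)
  have "QQ N a b * (1/2) \<le> QQ N a b * ?Y \<or> QQ N a b < 0" using Y by (metis mult_left_mono not_le)
  moreover have "0 \<le> QQ N a b" using ab by (intro QQ_nonneg) auto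
  ultimately have "QQ N a b * (1/2) \<le> ?F * ?X" using e by auto
  also have "\<dots> \<le> ?F * 1" using X F_pos by (intro mult_left_mono) auto
  finally show ?thesis by simp
qed

lemma Q_decayA: assumes ab: "1 \<le> a" "b \<le> int N - 1"
  and T: "T \<subseteq> {a..b} - {n1 N..n2 N}" and tT: "\<And>n. n \<in> T \<Longrightarrow> sN N (of_int n) \<le> 1 - t"
  and t: "0 \<le> t" "t \<le> 1"
  shows "QQ N a b \<le> 2 * QQ N (n1 N) (n2 N) * (1 - t) ^ card T"
proof -
  let ?F = "QQ N (n1 N) (n2 N)"
  let ?Y = "\<Prod>n\<in>{n1 N..n2 N} - {a..b}. sN N (of_int n)"
  let ?X = "\<Prod>n\<in>{a..b} - {n1 N..n2 N}. sN N (of_int n)"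
  have Y: "1/2 \<le> ?Y" using Y_lower[of "{}" a b 0] by simp
  have X: "?X \<le> (1 - t) ^ card T" using X_upper[OF T ab tT t(2)] .
  have e: "QQ N a b * ?Y = ?F * ?X" by (rule QQ_ratio)
  have "0 \<le> QQ N a b" using ab by (intro QQ_nonneg) auto
  then have "QQ N a b * (1/2) \<le> QQ N a b * ?Y" using Y by (intro mult_left_mono) auto
  also have "\<dots> \<le> ?F * (1 - t) ^ card T" unfolding e using X F_pos by (intro mult_left_mono) auto
  finally show ?thesis by simp
qed

lemma Q_decayB: assumes ab: "1 \<le> a" "b \<le> int N - 1"
  and T: "T \<subseteq> {n1 N..n2 N} - {a..b}" "n1 N \<notin> T" and tT: "\<And>n. n \<in> T \<Longrightarrow> 1 + t \<le> sN N (of_int n)"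
  and t: "0 \<le> t"
  shows "QQ N a b \<le> 2 * QQ N (n1 N) (n2 N) / (1 + t) ^ card T"
proof -
  let ?F = "QQ N (n1 N) (n2 N)"
  let ?Y = "\<Prod>n\<in>{n1 N..n2 N} - {a..b}. sN N (of_int n)"
  let ?X = "\<Prod>n\<in>{a..b} - {n1 N..n2 N}. sN N (of_int n)"
  have Y: "(1 + t) ^ card T / 2 \<le> ?Y" by (rule Y_lower[OF T tT t])
  have X: "?X \<le> 1" using X_upper[of "{}" a b 0] ab by simp
  have e: "QQ N a b * ?Y = ?F * ?X" by (rule QQ_ratio)
  have p: "0 < (1 + t) ^ card T" using t by simp
  have "0 \<le> QQ N a b" using ab by (intro QQ_nonneg) auto
  then have "QQ N a b * ((1 + t) ^ card T / 2) \<le> QQ N a b * ?Y" using Y by (intro mult_left_mono) auto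
  also have "\<dots> \<le> ?F * 1" unfolding e using X F_pos by (intro mult_left_mono) auto
  finally have "QQ N a b * (1 + t) ^ card T \<le> 2 * ?F" by simp
  then show ?thesis using p by (simp add: field_simps)
qed

end



lemma one_minus_pow: fixes t :: real assumes "0 \<le> t" "t \<le> 1"
  shows "(1 - t) ^ k \<le> 1 / (1 + t) ^ k"
proof -
  have "(1 - t) ^ k * (1 + t) ^ k = (1 - t*t) ^ k" by (simp add: power_mult_distrib[symmetric] algebra_simps)
  also have "\<dots> \<le> 1" using assms by (intro power_le_one) (auto simp: mult_le_one)
  finally have "(1 - t) ^ k * (1 + t) ^ k \<le> 1" .
  moreover have "0 < (1 + t) ^ k" using assms by simp
  ultimately show ?thesis by (simp add: field_simps)
qed

context bigN begin

lemma Q_decay: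
  assumes W: "4 \<le> W" "W \<le> real N / 24"
    and ab: "1 \<le> a" "a \<le> b" "b \<le> int N - 1"
    and nw: "\<not> (\<bar>real_of_int a - real N / 6\<bar> \<le> W \<and> \<bar>real_of_int b - 5 * real N / 6\<bar> \<le> W)"
  shows "QQ N a b \<le> 2 * QQ N (n1 N) (n2 N) / (1 + W/2 * pi / real N) ^ nat \<lfloor>W/2\<rfloor>"
proof -
  define d where "d = W/2"
  define t where "t = d * pi / real N"
  define K where "K = \<lfloor>d\<rfloor>"
  let ?F = "QQ N (n1 N) (n2 N)"
  let ?R = "2 * ?F / (1 + t) ^ nat K"
  have Np: "real N > 0" using Npos by simp
  have d2: "2 \<le> d" using W unfolding d_def by simp
  have dN: "d \<le> real N / 48" using W unfolding d_def by simp
  have K1: "real_of_int K \<le> d" "d < real_of_int K + 1" unfolding K_def by linarith+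
  have K2: "2 \<le> K" using d2 unfolding K_def by linarith
  have t0: "0 \<le> t" unfolding t_def using d2 Np by simp
  have th: "t \<le> 1/2"
  proof -
    have "t \<le> (real N / 48) * pi / real N" unfolding t_def using dN Np
      by (intro divide_right_mono mult_right_mono) auto
    also have "\<dots> = pi / 48" using Np by simp
    also have "\<dots> \<le> 1/2" using pi_less_4 by simp
    finally show ?thesis .
  qed
  have N1: "real_of_int (n1 N) \<le> real N / 6" "real N / 6 < real_of_int (n1 N) + 1" by (rule n1_bounds)+
  have N2: "real_of_int (n2 N) \<le> 5 * real N / 6" "5 * real N / 6 < real_of_int (n2 N) + 1" by (rule n2_bounds)+
  have ra: "1 \<le> real_of_int a" "real_of_int a \<le> real_of_int b" "real_of_int b \<le> real N - 1"
    using ab by simp_all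
  have cardI: "\<And>x::int. card {x..x + K - 1} = nat K" by simp
  have cardI2: "\<And>x::int. card {x - K + 1..x} = nat K" by simp
  have A_to_R: "QQ N a b \<le> 2 * ?F * (1 - t) ^ nat K \<Longrightarrow> QQ N a b \<le> ?R"
  proof -
    assume h: "QQ N a b \<le> 2 * ?F * (1 - t) ^ nat K"
    have "2 * ?F * (1 - t) ^ nat K \<le> 2 * ?F * (1 / (1 + t) ^ nat K)"
      using F_pos one_minus_pow[OF t0] th by (intro mult_left_mono) auto
    then show ?thesis using h by simp
  qed
  define c where "c = \<lceil>real N / 6 + d\<rceil>"
  have c1: "real N / 6 + d \<le> real_of_int c" "real_of_int c < real N / 6 + d + 1" unfolding c_def by linarith+
  have caseC: "QQ N a b \<le> ?R" if disj: "b < c \<or> c + K - 1 < a"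
  proof -
    let ?T = "{c..c + K - 1}"
    have mem: "real N / 6 + d \<le> real_of_int n \<and> real_of_int n < real N / 6 + W" if "n \<in> ?T" for n
    proof -
      have "c \<le> n" "n \<le> c + K - 1" using that by auto
      then have "real_of_int c \<le> real_of_int n" "real_of_int n \<le> real_of_int c + real_of_int K - 1"
        by (simp_all add: of_int_le_iff[symmetric] del: of_int_le_iff)
      then show ?thesis using c1 K1 unfolding d_def by linarith
    qed
    have T1: "?T \<subseteq> {n1 N..n2 N} - {a..b}"
    proof
      fix n assume n: "n \<in> ?T"
      from mem[OF n] have r: "real N / 6 + d \<le> real_of_int n" "real_of_int n < real N / 6 + W" by auto
      have "real_of_int (n1 N) < real_of_int n" using r N1 d2 by linarith
      then have "n1 N < n" by simp
      moreover have "real_of_int n < real_of_int (n2 N)" using r N2 W by linarith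
      then have "n < n2 N" by simp
      moreover have "n \<notin> {a..b}" using disj n by auto
      ultimately show "n \<in> {n1 N..n2 N} - {a..b}" by auto
    qed
    have T2: "n1 N \<notin> ?T"
    proof
      assume "n1 N \<in> ?T"
      from mem[OF this] N1 d2 show False by linarith
    qed
    have T3: "1 + t \<le> sN N (of_int n)" if "n \<in> ?T" for n
      unfolding t_def using mem[OF that] d2 th W
      by (intro sN_deep_mid[OF Npos]) (auto simp: t_def d_def)
    have "QQ N a b \<le> 2 * ?F / (1 + t) ^ card ?T"
      by (rule Q_decayB[OF ab(1) ab(3) T1 T2 T3 t0])
    then show ?thesis by simp
  qed
  define e where "e = \<lfloor>5 * real N / 6 - d\<rfloor>"
  have e1: "real_of_int e \<le> 5 * real N / 6 - d" "5 * real N / 6 - d < real_of_int e + 1" unfolding e_def by linarith+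
  have caseE: "QQ N a b \<le> ?R" if bE: "real_of_int b < 5 * real N / 6 - W"
  proof -
    let ?T = "{e - K + 1..e}"
    have mem: "5 * real N / 6 - W < real_of_int n \<and> real_of_int n \<le> 5 * real N / 6 - d" if "n \<in> ?T" for n
    proof -
      have "e - K + 1 \<le> n" "n \<le> e" using that by auto
      then have "real_of_int e - real_of_int K + 1 \<le> real_of_int n" "real_of_int n \<le> real_of_int e"
        by (simp_all add: of_int_le_iff[symmetric] del: of_int_le_iff)
      then show ?thesis using e1 K1 unfolding d_def by linarith
    qed
    have T1: "?T \<subseteq> {n1 N..n2 N} - {a..b}"
    proof
      fix n assume n: "n \<in> ?T"
      from mem[OF n] have r: "5 * real N / 6 - W < real_of_int n" "real_of_int n \<le> 5 * real N / 6 - d" by auto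
      have "real_of_int (n1 N) < real_of_int n" using r N1 W by linarith
      then have "n1 N < n" by simp
      moreover have "real_of_int n < real_of_int (n2 N)" using r N2 d2 by linarith
      then have "n < n2 N" by simp
      moreover have "real_of_int b < real_of_int n" using r bE by linarith
      then have "n \<notin> {a..b}" by auto
      ultimately show "n \<in> {n1 N..n2 N} - {a..b}" by auto
    qed
    have T2: "n1 N \<notin> ?T"
    proof
      assume "n1 N \<in> ?T"
      from mem[OF this] N1 W show False by linarith
    qed
    have T3: "1 + t \<le> sN N (of_int n)" if "n \<in> ?T" for n
      unfolding t_def using mem[OF that] d2 th W
      by (intro sN_deep_mid[OF Npos]) (auto simp: t_def d_def)
    have "QQ N a b \<le> 2 * ?F / (1 + t) ^ card ?T"
      by (rule Q_decayB[OF ab(1) ab(3) T1 T2 T3 t0])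
    then show ?thesis by simp
  qed
  have caseA: "QQ N a b \<le> ?R" if aA: "real_of_int a < real N / 6 - W" and bA: "a + K - 1 \<le> b"
  proof -
    let ?T = "{a..a + K - 1}"
    have mem: "1 \<le> real_of_int n \<and> real_of_int n < real N / 6 - d - 1" if "n \<in> ?T" for n
    proof -
      have "a \<le> n" "n \<le> a + K - 1" using that by auto
      then have "real_of_int a \<le> real_of_int n" "real_of_int n \<le> real_of_int a + real_of_int K - 1"
        by (simp_all add: of_int_le_iff[symmetric] del: of_int_le_iff)
      then show ?thesis using aA K1 ra unfolding d_def by linarith
    qed
    have T1: "?T \<subseteq> {a..b} - {n1 N..n2 N}"
    proof
      fix n assume n: "n \<in> ?T"
      from mem[OF n] have r: "real_of_int n < real N / 6 - d - 1" by auto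
      have "real_of_int n < real_of_int (n1 N)" using r N1 d2 by linarith
      then have "n < n1 N" by simp
      moreover have "n \<in> {a..b}" using n bA by auto
      ultimately show "n \<in> {a..b} - {n1 N..n2 N}" by auto
    qed
    have T3: "sN N (of_int n) \<le> 1 - t" if "n \<in> ?T" for n
      unfolding t_def using mem[OF that] d2 th W
      by (intro sN_deep_small[OF Npos]) (auto simp: t_def d_def)
    have "QQ N a b \<le> 2 * ?F * (1 - t) ^ card ?T"
      by (rule Q_decayA[OF ab(1) ab(3) T1 T3 t0]) (use th in auto)
    then show ?thesis using A_to_R by simp
  qed
  have caseB: "QQ N a b \<le> ?R" if bB: "5 * real N / 6 + W < real_of_int b" and aB: "a \<le> b - K + 1"
  proof -
    let ?T = "{b - K + 1..b}"
    have mem: "5 * real N / 6 + d + 1 < real_of_int n \<and> real_of_int n \<le> real N - 1" if "n \<in> ?T" for n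
    proof -
      have "b - K + 1 \<le> n" "n \<le> b" using that by auto
      then have "real_of_int b - real_of_int K + 1 \<le> real_of_int n" "real_of_int n \<le> real_of_int b"
        by (simp_all add: of_int_le_iff[symmetric] del: of_int_le_iff)
      then show ?thesis using bB K1 ra unfolding d_def by linarith
    qed
    have T1: "?T \<subseteq> {a..b} - {n1 N..n2 N}"
    proof
      fix n assume n: "n \<in> ?T"
      from mem[OF n] have r: "5 * real N / 6 + d + 1 < real_of_int n" by auto
      have "real_of_int (n2 N) < real_of_int n" using r N2 d2 by linarith
      then have "n2 N < n" by simp
      moreover have "n \<in> {a..b}" using n aB by auto
      ultimately show "n \<in> {a..b} - {n1 N..n2 N}" by auto
    qed
    have T3: "sN N (of_int n) \<le> 1 - t" if "n \<in> ?T" for n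
      unfolding t_def using mem[OF that] d2 th W
      by (intro sN_deep_small[OF Npos]) (auto simp: t_def d_def)
    have "QQ N a b \<le> 2 * ?F * (1 - t) ^ card ?T"
      by (rule Q_decayA[OF ab(1) ab(3) T1 T3 t0]) (use th in auto)
    then show ?thesis using A_to_R by simp
  qed
  have "QQ N a b \<le> ?R"
  proof -
    have "real_of_int a < real N / 6 - W \<or> real N / 6 + W < real_of_int a
        \<or> real_of_int b < 5 * real N / 6 - W \<or> 5 * real N / 6 + W < real_of_int b"
      using nw by linarith
    moreover
    { assume h: "real N / 6 + W < real_of_int a"
      have "real_of_int (c + K - 1) < real_of_int a" using h c1 K1 unfolding d_def by (simp; linarith)
      then have "c + K - 1 < a" by (simp only: of_int_less_iff)
      then have ?thesis by (intro caseC) auto }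
    moreover
    { assume h: "real_of_int a < real N / 6 - W"
      have ?thesis
      proof (cases "a + K - 1 \<le> b")
        case True then show ?thesis by (rule caseA[OF h])
      next
        case False
        then have "b + 1 < a + K" by simp
        then have "real_of_int b + 1 < real_of_int a + real_of_int K"
          by (metis of_int_add of_int_less_iff of_int_1)
        then have "real_of_int b < real_of_int c" using h c1 K1 W unfolding d_def by linarith
        then have "b < c" by simp
        then show ?thesis by (intro caseC) auto
      qed }
    moreover
    { assume h: "real_of_int b < 5 * real N / 6 - W"
      then have ?thesis by (rule caseE) }
    moreover
    { assume h: "5 * real N / 6 + W < real_of_int b"
      have ?thesis
      proof (cases "a \<le> b - K + 1")
        case True then show ?thesis by (rule caseB[OF h])
      next
        case False
        then have "b + 1 < a + K" by simp
        then have "real_of_int b + 1 < real_of_int a + real_of_int K"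
          by (metis of_int_add of_int_less_iff of_int_1)
        then have "real_of_int (c + K - 1) < real_of_int a" using h c1 K1 W unfolding d_def by (simp; linarith)
        then have "c + K - 1 < a" by (simp only: of_int_less_iff)
        then show ?thesis by (intro caseC) auto
      qed }
    ultimately show ?thesis by blast
  qed
  then show ?thesis unfolding t_def d_def K_def .
qed

end


lemma sN_sixth: "N > 0 \<Longrightarrow> sN N (real N / 6) = 1"
  unfolding sN_def by (simp add: sin_30)

lemma sN_five_sixth: "N > 0 \<Longrightarrow> sN N (5 * real N / 6) = 1"
proof -
  assume N: "N > 0"
  have e: "5 * real N / 6 = real N - real N / 6" by simp
  have "sN N (real N - real N / 6) = sN N (real N / 6)" by (rule sN_sym[OF N])
  then show ?thesis using sN_sixth[OF N] by (simp only: e)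
qed

lemma QQ_step: assumes "a \<le> b + 1"
  shows "QQ N (a - 1) (b + 1) = sN N (of_int (a - 1)) * QQ N a b * sN N (of_int (b + 1))"
proof -
  have e: "{a - 1..b + 1} = insert (a - 1) (insert (b + 1) {a..b})" using assms by auto
  have "QQ N (a - 1) (b + 1) = sN N (of_int (a - 1)) * (sN N (of_int (b + 1)) * QQ N a b)"
    unfolding QQ_def e using assms by (subst prod.insert; auto)+
  then show ?thesis by (simp add: mult_ac)
qed

lemma sin_ge_inv: assumes N: "12 \<le> N" and n: "1 \<le> x" "x \<le> real N - 1"
  shows "1 / real N \<le> sin (x * pi / real N)"
proof -
  have Np: "real N > 0" using N by simp
  let ?u = "pi / real N"
  have u0: "0 \<le> ?u" by simp
  have u1: "?u \<le> 1/3" using N pi_less_4 by (simp add: field_simps)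
  have "sin ?u \<le> sin (x * pi / real N)"
  proof (rule sin_ge_between)
    show "0 \<le> ?u" by simp
    have "1 * pi / real N \<le> x * pi / real N" using n Np by (intro divide_right_mono mult_right_mono) auto
    then show "?u \<le> x * pi / real N" by simp
    have "x * pi / real N \<le> (real N - 1) * pi / real N" using n Np by (intro divide_right_mono mult_right_mono) auto
    also have "\<dots> = pi - ?u" using Np by (simp add: field_simps)
    finally show "x * pi / real N \<le> pi - ?u" .
  qed
  moreover have "?u - ?u^3/6 \<le> sin ?u" by (rule sin_lower3[OF u0])
  moreover have "?u^3 \<le> ?u * (1/9)"
  proof -
    have "?u^2 \<le> (1/3)^2" using u0 u1 by (intro power_mono) auto
    then have "?u * ?u^2 \<le> ?u * (1/3)^2" using u0 by (intro mult_left_mono) auto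
    then show ?thesis by (simp add: power3_eq_cube power2_eq_square)
  qed
  moreover have "1 / real N \<le> ?u - ?u * (1/9) / 6"
  proof -
    have "?u - ?u * (1/9) / 6 = pi * (53/54) / real N" by (simp add: field_simps)
    moreover have "1 / real N \<le> pi * (53/54) / real N" using Np pi_gt3 by (intro divide_right_mono) auto
    ultimately show ?thesis by simp
  qed
  ultimately have "1 / real N \<le> sin ?u" by (smt (verit) divide_right_mono mult_left_mono)
  then show ?thesis using \<open>sin ?u \<le> sin (x * pi / real N)\<close> by linarith
qed

context bigN begin

definition win :: "real \<Rightarrow> int \<Rightarrow> int \<Rightarrow> bool" where
  "win W j l \<longleftrightarrow> \<bar>real_of_int (j - l) - real N / 6\<bar> \<le> W \<and> \<bar>real_of_int (j + l) - 5 * real N / 6\<bar> \<le> W"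

lemma cc_crude: assumes j: "1 \<le> j" "2 * j \<le> int N - 2" and l: "0 \<le> l" "l < j"
  shows "\<bar>cc N j l\<bar> \<le> 2 * real N ^ 3"
proof -
  have Np: "real N > 0" using Npos by simp
  let ?S = "\<lambda>x::int. sin (real_of_int x * pi / real N)"
  have sl: "1 / real N \<le> ?S x" if "1 \<le> x" "x \<le> int N - 1" for x
    using that N12 by (intro sin_ge_inv) auto
  have t0: "\<bar>cos (real_of_int j * pi / real N) / ?S j\<bar> \<le> real N"
  proof -
    have s: "1 / real N \<le> ?S j" using j by (intro sl) auto
    have "0 < 1 / real N" using Np by simp
    then have sp: "0 < ?S j" using s by linarith
    have "\<bar>cos (real_of_int j * pi / real N) / ?S j\<bar> = \<bar>cos (real_of_int j * pi / real N)\<bar> / ?S j"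
      using sp by (simp add: abs_div)
    also have "\<dots> \<le> 1 / ?S j" using sp by (intro divide_right_mono) auto
    also have "\<dots> \<le> 1 / (1 / real N)" using s sp Np by (intro divide_left_mono) (auto intro: divide_pos_pos)
    finally show ?thesis by simp
  qed
  have tk: "\<bar>?S (2*j) / (?S (j - k) * ?S (j + k))\<bar> \<le> real N ^ 2" if k: "k \<in> {1..l}" for k
  proof -
    have s1: "1 / real N \<le> ?S (j - k)" using k l j by (intro sl) auto
    have s2: "1 / real N \<le> ?S (j + k)" using k l j by (intro sl) auto
    have iN: "0 < 1 / real N" using Np by simp
    have "0 \<le> ?S (j - k)" using s1 iN by linarith
    then have p: "1 / real N * (1 / real N) \<le> ?S (j - k) * ?S (j + k)"
      using s1 s2 iN by (intro mult_mono) auto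
    have pp: "0 < 1 / real N * (1 / real N)" using Np by simp
    have pos: "0 < ?S (j - k) * ?S (j + k)" using p pp by linarith
    have "\<bar>?S (2*j) / (?S (j - k) * ?S (j + k))\<bar> = \<bar>?S (2*j)\<bar> / (?S (j - k) * ?S (j + k))"
      by (simp only: abs_divide abs_of_pos[OF pos])
    also have "\<dots> \<le> 1 / (?S (j - k) * ?S (j + k))" using pos by (intro divide_right_mono) auto
    also have "\<dots> \<le> 1 / (1 / real N * (1 / real N))" using p pp pos by (intro divide_left_mono) auto
    finally show ?thesis by (simp add: power2_eq_square)
  qed
  have "\<bar>cc N j l\<bar> \<le> real N + (\<Sum>k\<in>{1..l}. real N ^ 2)"
  proof -
    have "\<bar>cc N j l\<bar> \<le> \<bar>cos (real_of_int j * pi / real N) / ?S j\<bar>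
        + \<bar>\<Sum>k\<in>{1..l}. ?S (2*j) / (?S (j - k) * ?S (j + k))\<bar>"
      unfolding cc_def by (rule abs_triangle_ineq)
    also have "\<bar>\<Sum>k\<in>{1..l}. ?S (2*j) / (?S (j - k) * ?S (j + k))\<bar> \<le> (\<Sum>k\<in>{1..l}. real N ^ 2)"
      by (rule order_trans[OF sum_abs sum_mono]) (use tk in auto)
    finally show ?thesis using t0 by linarith
  qed
  also have "(\<Sum>k\<in>{1..l}. real N ^ 2) = real (nat l) * real N ^ 2" by simp
  also have "real (nat l) * real N ^ 2 \<le> real N * real N ^ 2"
    using l j by (intro mult_right_mono) auto
  finally have "\<bar>cc N j l\<bar> \<le> real N + real N ^ 3" by (simp add: power3_eq_cube power2_eq_square)
  moreover have "real N \<le> real N ^ 3"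
  proof -
    have "1 \<le> real N ^ 2" using N12 by (intro one_le_power) auto
    then have "real N * 1 \<le> real N * real N ^ 2" by (intro mult_left_mono) auto
    then show ?thesis by (simp add: power3_eq_cube power2_eq_square)
  qed
  ultimately show ?thesis by linarith
qed

end


lemma alg_fac: fixes X1 Y1 X2 Y2 e h :: real
  assumes b: "\<bar>X1\<bar> \<le> 2" "\<bar>Y1\<bar> \<le> 2" "\<bar>X2\<bar> \<le> 2" "\<bar>Y2\<bar> \<le> 2"
    and e: "\<bar>1 - X1\<bar> \<le> e" "\<bar>1 - Y1\<bar> \<le> e" and h: "\<bar>X2 - X1\<bar> \<le> h" "\<bar>Y2 - Y1\<bar> \<le> h"
  shows "\<bar>1 - 2 * (X1 * Y1) + (X1 * Y1) * (X2 * Y2)\<bar> \<le> 9 * e^2 + 16 * h"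
proof -
  let ?r1 = "X1 * Y1" and ?r2 = "X2 * Y2"
  have id: "1 - 2 * ?r1 + ?r1 * ?r2 = (1 - ?r1)^2 + ?r1 * (?r2 - ?r1)" by (simp add: algebra_simps power2_eq_square)
  have "1 - ?r1 = (1 - Y1) + Y1 * (1 - X1)" by (simp add: algebra_simps)
  then have "\<bar>1 - ?r1\<bar> \<le> \<bar>1 - Y1\<bar> + \<bar>Y1\<bar> * \<bar>1 - X1\<bar>" by (metis abs_mult abs_triangle_ineq)
  also have "\<bar>Y1\<bar> * \<bar>1 - X1\<bar> \<le> 2 * e" using b e by (intro mult_mono) auto
  finally have r1: "\<bar>1 - ?r1\<bar> \<le> 3 * e" using e by linarith
  have "?r2 - ?r1 = X2 * (Y2 - Y1) + Y1 * (X2 - X1)" by (simp add: algebra_simps)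
  then have "\<bar>?r2 - ?r1\<bar> \<le> \<bar>X2\<bar> * \<bar>Y2 - Y1\<bar> + \<bar>Y1\<bar> * \<bar>X2 - X1\<bar>" by (metis abs_mult abs_triangle_ineq)
  also have "\<bar>X2\<bar> * \<bar>Y2 - Y1\<bar> \<le> 2 * h" using b h by (intro mult_mono) auto
  also have "\<bar>Y1\<bar> * \<bar>X2 - X1\<bar> \<le> 2 * h" using b h by (intro mult_mono) auto
  finally have r2: "\<bar>?r2 - ?r1\<bar> \<le> 4 * h" by linarith
  have "\<bar>X1\<bar> * \<bar>Y1\<bar> \<le> 2 * 2" using b by (intro mult_mono) auto
  then have r1b: "\<bar>?r1\<bar> \<le> 4" by (simp add: abs_mult)
  have "\<bar>?r1 * (?r2 - ?r1)\<bar> \<le> 4 * (4 * h)" unfolding abs_mult using r1b r2 by (intro mult_mono) auto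
  moreover have "\<bar>1 - ?r1\<bar>^2 \<le> (3 * e)^2" by (rule power_mono) (use r1 in auto)
  then have "(1 - ?r1)^2 \<le> (3 * e)^2" by (simp only: power2_abs)
  moreover have "\<bar>(1 - ?r1)^2 + ?r1 * (?r2 - ?r1)\<bar> \<le> \<bar>(1 - ?r1)^2\<bar> + \<bar>?r1 * (?r2 - ?r1)\<bar>"
    by (rule abs_triangle_ineq)
  moreover have "\<bar>(1 - ?r1)^2\<bar> = (1 - ?r1)^2" by simp
  ultimately show ?thesis unfolding id by (simp add: power_mult_distrib)
qed

context bigN begin

lemma fac_bound:
  fixes x y :: real
  defines "r1 \<equiv> sN N (x - 1) * sN N (y + 1)" and "r2 \<equiv> sN N (x - 2) * sN N (y + 2)"
  shows "\<bar>1 - 2 * r1 + r1 * r2\<bar> \<le> 9 * 5^2 + 16 * 2"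
    and "\<lbrakk>\<bar>x - real N / 6\<bar> \<le> W; \<bar>y - 5 * real N / 6\<bar> \<le> W; 0 \<le> W\<rbrakk> \<Longrightarrow>
       \<bar>1 - 2 * r1 + r1 * r2\<bar> \<le> 9 * (2 * pi * (W + 1) / real N)^2 + 16 * (2 * pi / real N)"
proof -
  have Np: "real N > 0" using Npos by simp
  have b: "\<bar>sN N z\<bar> \<le> 2" for z by (rule sN_abs_le2)
  have g1: "\<bar>1 - sN N z\<bar> \<le> 3" for z using b[of z] by linarith
  have g2: "\<bar>sN N z - sN N w\<bar> \<le> 4" for z w using b[of z] b[of w] by linarith
  have "\<bar>1 - 2 * r1 + r1 * r2\<bar> \<le> 9 * 3^2 + 16 * 4"
    unfolding r1_def r2_def by (rule alg_fac[OF b b b b g1 g1 g2 g2])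
  then show "\<bar>1 - 2 * r1 + r1 * r2\<bar> \<le> 9 * 5^2 + 16 * 2" by simp
  assume w: "\<bar>x - real N / 6\<bar> \<le> W" "\<bar>y - 5 * real N / 6\<bar> \<le> W" "0 \<le> W"
  have l1: "\<bar>1 - sN N (x - 1)\<bar> \<le> 2 * pi * (W + 1) / real N"
  proof -
    have "\<bar>sN N (real N / 6) - sN N (x - 1)\<bar> \<le> 2 * pi * \<bar>real N / 6 - (x - 1)\<bar> / real N"
      by (rule sN_lip[OF Npos])
    also have "\<dots> \<le> 2 * pi * (W + 1) / real N" using w Np
      by (intro divide_right_mono mult_left_mono) auto
    finally show ?thesis using sN_sixth[OF Npos] by simp
  qed
  have l2: "\<bar>1 - sN N (y + 1)\<bar> \<le> 2 * pi * (W + 1) / real N"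
  proof -
    have "\<bar>sN N (5 * real N / 6) - sN N (y + 1)\<bar> \<le> 2 * pi * \<bar>5 * real N / 6 - (y + 1)\<bar> / real N"
      by (rule sN_lip[OF Npos])
    also have "\<dots> \<le> 2 * pi * (W + 1) / real N" using w Np
      by (intro divide_right_mono mult_left_mono) auto
    finally show ?thesis using sN_five_sixth[OF Npos] by simp
  qed
  have l3: "\<bar>sN N (z - 1) - sN N (z - 2)\<bar> \<le> 2 * pi / real N" for z
    using sN_lip[OF Npos, of "z - 1" "z - 2"] by simp
  have l4: "\<bar>sN N (z + 2) - sN N (z + 1)\<bar> \<le> 2 * pi / real N" for z
    using sN_lip[OF Npos, of "z + 2" "z + 1"] by simp
  have l3': "\<bar>sN N (x - 2) - sN N (x - 1)\<bar> \<le> 2 * pi / real N" using l3[of x] by (simp add: abs_minus_commute)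
  show "\<bar>1 - 2 * r1 + r1 * r2\<bar> \<le> 9 * (2 * pi * (W + 1) / real N)^2 + 16 * (2 * pi / real N)"
    unfolding r1_def r2_def by (rule alg_fac[OF b b b b l1 l2 l3' l4])
qed

lemma cc_win: assumes W: "1 \<le> W" "W \<le> real N / 24"
  and j: "1 \<le> j" "2 * j \<le> int N - 2" and l: "0 \<le> l" "l < j" and w: "win W j l"
  shows "\<bar>cc N j l\<bar> \<le> 4 + 32 * pi * W"
proof -
  have Np: "real N > 0" using Npos by simp
  let ?S = "\<lambda>x::int. sin (real_of_int x * pi / real N)"
  have wa: "real N / 6 - W \<le> real_of_int j - real_of_int l" and wb: "real_of_int j + real_of_int l \<le> 5 * real N / 6 + W"
    and wab: "real N - 2 * W \<le> 2 * real_of_int j"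
    using w unfolding win_def by auto
  have rj: "2 * real_of_int j \<le> real N - 2" using j by linarith
  have sq: "1/4 \<le> ?S x" if "real_of_int j - real_of_int l \<le> real_of_int x" "real_of_int x \<le> real_of_int j + real_of_int l" for x
  proof -
    have "1/2 \<le> sN N (real_of_int x)" using that wa wb W by (intro sN_ge_half[OF Npos]) auto
    then show ?thesis unfolding sN_def by simp
  qed
  have t0: "\<bar>cos (real_of_int j * pi / real N) / ?S j\<bar> \<le> 4"
  proof -
    have s: "1/4 \<le> ?S j" using l by (intro sq) auto
    have "\<bar>cos (real_of_int j * pi / real N) / ?S j\<bar> = \<bar>cos (real_of_int j * pi / real N)\<bar> / ?S j"
      using s by (simp add: abs_divide)
    also have "\<dots> \<le> 1 / ?S j" using s by (intro divide_right_mono) auto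
    also have "\<dots> \<le> 1 / (1/4)" using s by (intro divide_left_mono) auto
    finally show ?thesis by simp
  qed
  have s2j: "\<bar>?S (2 * j)\<bar> \<le> 2 * W * pi / real N"
  proof -
    have "?S (2 * j) = sin (pi - real_of_int (2 * j) * pi / real N)" by simp
    also have "pi - real_of_int (2 * j) * pi / real N = (real N - 2 * real_of_int j) * pi / real N"
      using Np by (simp add: field_simps)
    finally have "\<bar>?S (2 * j)\<bar> \<le> \<bar>(real N - 2 * real_of_int j) * pi / real N\<bar>"
      using abs_sin_x_le_abs_x[of "(real N - 2 * real_of_int j) * pi / real N"] by (simp only:)
    also have "\<dots> = (real N - 2 * real_of_int j) * pi / real N" using rj Np by simp
    also have "\<dots> \<le> (2 * W) * pi / real N" using wab Np by (intro divide_right_mono mult_right_mono) auto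
    finally show ?thesis by simp
  qed
  have tk: "\<bar>?S (2*j) / (?S (j - k) * ?S (j + k))\<bar> \<le> 32 * pi * W / real N" if k: "k \<in> {1..l}" for k
  proof -
    have s1: "1/4 \<le> ?S (j - k)" using k by (intro sq) auto
    have s2: "1/4 \<le> ?S (j + k)" using k by (intro sq) auto
    have p: "1/4 * (1/4) \<le> ?S (j - k) * ?S (j + k)" using s1 s2 by (intro mult_mono) auto
    have pos: "0 < ?S (j - k) * ?S (j + k)" using p by linarith
    have "\<bar>?S (2*j) / (?S (j - k) * ?S (j + k))\<bar> = \<bar>?S (2*j)\<bar> / (?S (j - k) * ?S (j + k))"
      by (simp only: abs_divide abs_of_pos[OF pos])
    also have "\<dots> \<le> (2 * W * pi / real N) / (?S (j - k) * ?S (j + k))" using pos s2j by (intro divide_right_mono) auto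
    also have "\<dots> \<le> (2 * W * pi / real N) / (1/4 * (1/4))" using p pos W Np by (intro divide_left_mono) auto
    finally show ?thesis by (simp add: mult_ac)
  qed
  have "\<bar>cc N j l\<bar> \<le> 4 + (\<Sum>k\<in>{1..l}. 32 * pi * W / real N)"
  proof -
    have "\<bar>cc N j l\<bar> \<le> \<bar>cos (real_of_int j * pi / real N) / ?S j\<bar>
        + \<bar>\<Sum>k\<in>{1..l}. ?S (2*j) / (?S (j - k) * ?S (j + k))\<bar>"
      unfolding cc_def by (rule abs_triangle_ineq)
    also have "\<bar>\<Sum>k\<in>{1..l}. ?S (2*j) / (?S (j - k) * ?S (j + k))\<bar> \<le> (\<Sum>k\<in>{1..l}. 32 * pi * W / real N)"
      by (rule order_trans[OF sum_abs sum_mono]) (use tk in auto)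
    finally show ?thesis using t0 by linarith
  qed
  also have "(\<Sum>k\<in>{1..l}. 32 * pi * W / real N) = real (nat l) * (32 * pi * W / real N)" by simp
  also have "\<dots> \<le> real N * (32 * pi * W / real N)" using l j W by (intro mult_right_mono) auto
  also have "\<dots> = 32 * pi * W" using Np by simp
  finally show ?thesis by simp
qed

end


lemma alt_identity: fixes x :: "nat \<Rightarrow> real"
  shows "4 * (\<Sum>l<m+2. (-1)^l * x l) = 2 * x 0 + 2 * (-1)^(m+1) * x (m+1) + (x 0 - x 1)
     + (-1)^m * (x m - x (m+1)) + (\<Sum>l<m. (-1)^l * (x l - 2 * x (Suc l) + x (Suc (Suc l))))"
proof (induction m)
  case 0 then show ?case by (simp add: numeral_2_eq_2)
next
  case (Suc m)
  have "4 * (\<Sum>l<Suc m + 2. (-1)^l * x l) = 4 * (\<Sum>l<m + 2. (-1)^l * x l) + 4 * (-1)^(m+2) * x (m+2)"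
    by (simp add: algebra_simps)
  also have "\<dots> = 2 * x 0 + 2 * (-1)^(m+1) * x (m+1) + (x 0 - x 1)
     + (-1)^m * (x m - x (m+1)) + (\<Sum>l<m. (-1)^l * (x l - 2 * x (Suc l) + x (Suc (Suc l))))
     + 4 * (-1)^(m+2) * x (m+2)" using Suc by simp
  also have "\<dots> = 2 * x 0 + 2 * (-1)^(Suc m+1) * x (Suc m+1) + (x 0 - x 1)
     + (-1)^(Suc m) * (x (Suc m) - x (Suc m+1)) + (\<Sum>l<Suc m. (-1)^l * (x l - 2 * x (Suc l) + x (Suc (Suc l))))"
    by (simp add: algebra_simps)
  finally show ?case .
qed

lemma alt_bound: fixes x :: "nat \<Rightarrow> real"
  assumes M: "\<And>l. l < n \<Longrightarrow> l \<le> 1 \<or> n \<le> l + 2 \<Longrightarrow> \<bar>x l\<bar> \<le> M" and M0: "0 \<le> M"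
  shows "\<bar>\<Sum>l<n. (-1)^l * x l\<bar> \<le> 4 * M + (\<Sum>l<n-2. \<bar>x l - 2 * x (Suc l) + x (Suc (Suc l))\<bar>)"
proof (cases "n < 2")
  case True
  show ?thesis
  proof (cases "n = 0")
    case True then show ?thesis using M0 by simp
  next
    case False
    then have "n = 1" using \<open>n < 2\<close> by simp
    then show ?thesis using M[of 0] M0 by simp
  qed
next
  case False
  then obtain m where m: "n = m + 2" by (metis add.commute le_add_diff_inverse not_less)
  have a: "\<bar>x 0\<bar> \<le> M" "\<bar>x 1\<bar> \<le> M" "\<bar>x m\<bar> \<le> M" "\<bar>x (m+1)\<bar> \<le> M" using M m by auto
  let ?D = "\<Sum>l<m. \<bar>x l - 2 * x (Suc l) + x (Suc (Suc l))\<bar>"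
  have d: "\<bar>\<Sum>l<m. (-1)^l * (x l - 2 * x (Suc l) + x (Suc (Suc l)))\<bar> \<le> ?D"
    by (rule order_trans[OF sum_abs]) (simp add: abs_mult)
  have "\<bar>4 * (\<Sum>l<m+2. (-1)^l * x l)\<bar> \<le> 2 * \<bar>x 0\<bar> + 2 * \<bar>x (m+1)\<bar> + (\<bar>x 0\<bar> + \<bar>x 1\<bar>)
     + (\<bar>x m\<bar> + \<bar>x (m+1)\<bar>) + ?D"
  proof -
    have s1: "\<bar>2 * (-1)^(m+1) * x (m+1)\<bar> = 2 * \<bar>x (m+1)\<bar>" by (simp add: abs_mult)
    have s2: "\<bar>(-1)^m * (x m - x (m+1))\<bar> = \<bar>x m - x (m+1)\<bar>" by (simp add: abs_mult)
    have gen: "\<bar>A + B + C + Dd + S\<bar> \<le> \<bar>A\<bar> + \<bar>B\<bar> + \<bar>C\<bar> + \<bar>Dd\<bar> + \<bar>S\<bar>" for A B C Dd S :: real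
      by (smt (verit) abs_triangle_ineq)
    have "\<bar>x 0 - x 1\<bar> \<le> \<bar>x 0\<bar> + \<bar>x 1\<bar>" "\<bar>x m - x (m+1)\<bar> \<le> \<bar>x m\<bar> + \<bar>x (m+1)\<bar>"
      by (rule abs_triangle_ineq4)+
    then show ?thesis unfolding alt_identity using gen[of "2 * x 0" "2 * (-1)^(m+1) * x (m+1)" "x 0 - x 1"
        "(-1)^m * (x m - x (m+1))" "\<Sum>l<m. (-1)^l * (x l - 2 * x (Suc l) + x (Suc (Suc l)))"] d s1 s2
      by (simp only: abs_mult abs_numeral; linarith)
  qed
  then have "4 * \<bar>\<Sum>l<m+2. (-1)^l * x l\<bar> \<le> 16 * M + ?D" using a by (simp only: abs_mult abs_numeral; linarith)
  moreover have "0 \<le> ?D" by (simp add: sum_nonneg)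
  ultimately have fin: "\<bar>\<Sum>l<m+2. (-1)^l * x l\<bar> \<le> 4 * M + ?D" by linarith
  have e: "n - 2 = m" using m by simp
  show ?thesis unfolding e unfolding m by (rule fin)
qed

lemma sum_int_nat: assumes "0 \<le> j" shows "(\<Sum>l\<in>{0..j-1}. f l) = (\<Sum>l<nat j. f (int l))"
proof -
  have e: "{0..j-1} = int ` {..<nat j}"
  proof
    show "{0..j-1} \<subseteq> int ` {..<nat j}"
    proof
      fix y assume "y \<in> {0..j-1}"
      then show "y \<in> int ` {..<nat j}" by (intro image_eqI[where x = "nat y"]) auto
    qed
  qed auto
  show ?thesis unfolding e by (subst sum.reindex) auto
qed



lemma sum_split_bound: fixes g :: "nat \<Rightarrow> real"
  assumes g: "\<And>l. l < n \<Longrightarrow> g l \<le> (if P l then A else B)" and B: "0 \<le> B"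
  shows "(\<Sum>l<n. g l) \<le> A * real (card {l. l < n \<and> P l}) + B * real n"
proof -
  have "(\<Sum>l<n. g l) \<le> (\<Sum>l<n. if P l then A else B)" using g by (intro sum_mono) auto
  also have "\<dots> = (\<Sum>l\<in>{..<n} \<inter> {l. P l}. A) + (\<Sum>l\<in>{..<n} \<inter> - {l. P l}. B)"
    by (rule sum.If_cases) simp
  also have "(\<Sum>l\<in>{..<n} \<inter> {l. P l}. A) = A * real (card {l. l < n \<and> P l})"
  proof -
    have "{..<n} \<inter> {l. P l} = {l. l < n \<and> P l}" by auto
    then show ?thesis by simp
  qed
  also have "(\<Sum>l\<in>{..<n} \<inter> - {l. P l}. B) \<le> B * real n"
  proof -
    have "card ({..<n} \<inter> - {l. P l}) \<le> card {..<n}" by (intro card_mono) auto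
    then have "real (card ({..<n} \<inter> - {l. P l})) \<le> real n" by simp
    then show ?thesis using B by (simp add: mult_left_mono mult.commute)
  qed
  finally show ?thesis by simp
qed

locale bigNW = bigN +
  fixes W :: real
  assumes W4: "4 \<le> W" and WN: "W \<le> real N / 24"
begin

definition "FN = QQ N (n1 N) (n2 N)"
definition "EN = 2 * FN / (1 + W/2 * pi / real N) ^ nat \<lfloor>W/2\<rfloor>"
definition "K1 = 9 * (2 * pi * (W + 1) / real N)^2 + 16 * (2 * pi / real N)"
definition "cnt j = card {l. l < nat j \<and> win W j (int l)}"

lemma FN_pos: "0 < FN" unfolding FN_def by (rule F_pos)

lemma EN_nonneg: "0 \<le> EN"
proof -
  have "0 < 1 + W/2 * pi / real N" using W4 Npos by (intro add_pos_nonneg) auto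
  then show ?thesis unfolding EN_def using FN_pos by (intro divide_nonneg_pos) auto
qed

lemma K1_nonneg: "0 \<le> K1" unfolding K1_def using Npos by simp

lemma win_imp: assumes "win W j l" shows "2 \<le> l" "3 \<le> j - l"
proof -
  have N96: "96 \<le> real N" using W4 WN by linarith
  have a: "\<bar>real_of_int (j - l) - real N / 6\<bar> \<le> W" and b: "\<bar>real_of_int (j + l) - 5 * real N / 6\<bar> \<le> W"
    using assms unfolding win_def by auto
  have "real_of_int (j + l) - real_of_int (j - l) \<ge> 2 * real N / 3 - 2 * W" using a b by linarith
  then have "2 * real_of_int l \<ge> 2 * real N / 3 - 2 * W" by simp
  then have "real_of_int l \<ge> 2" using WN N96 by linarith
  then show "2 \<le> l" by simp
  have "real_of_int (j - l) \<ge> 3" using a WN N96 by linarith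
  then show "3 \<le> j - l" by linarith
qed

context
  fixes j :: int assumes j: "1 \<le> j" "2 * j \<le> int N - 2"
begin

lemma Qb: assumes l: "0 \<le> l" "l < j"
  shows "QQ N (j - l) (j + l) \<le> 2 * FN" "\<not> win W j l \<Longrightarrow> QQ N (j - l) (j + l) \<le> EN"
proof -
  show "QQ N (j - l) (j + l) \<le> 2 * FN" unfolding FN_def using l j by (intro Q_le_general) auto
  assume nw: "\<not> win W j l"
  show "QQ N (j - l) (j + l) \<le> EN" unfolding EN_def FN_def
    using l j nw W4 WN by (intro Q_decay) (auto simp: win_def)
qed

lemma Qnn: assumes l: "0 \<le> l" "l < j" shows "0 \<le> QQ N (j - l) (j + l)"
  using l j by (intro QQ_nonneg) auto

lemma U_bound:
  "\<bar>\<Sum>l\<in>{0..j-1}. (-1) ^ nat l * QQ N (j - l) (j + l)\<bar> \<le> 4 * EN + 2 * FN * K1 * real (cnt j) + 257 * EN * real (nat j)"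
proof -
  define x where "x l = QQ N (j - int l) (j + int l)" for l :: nat
  have e: "(\<Sum>l\<in>{0..j-1}. (-1) ^ nat l * QQ N (j - l) (j + l)) = (\<Sum>l<nat j. (-1)^l * x l)"
    unfolding x_def using j by (subst sum_int_nat) auto
  have xr: "0 \<le> x l \<and> x l \<le> 2 * FN \<and> (\<not> win W j (int l) \<longrightarrow> x l \<le> EN)" if "l < nat j" for l
    unfolding x_def using that Qb[of "int l"] Qnn[of "int l"] by auto
  have M: "\<bar>x l\<bar> \<le> EN" if "l < nat j" "l \<le> 1 \<or> nat j \<le> l + 2" for l
  proof -
    have "\<not> win W j (int l)"
    proof
      assume w: "win W j (int l)"
      from win_imp[OF w] that show False by auto
    qed
    then show ?thesis using xr[OF that(1)] by auto
  qed
  have A: "\<bar>\<Sum>l<nat j. (-1)^l * x l\<bar> \<le> 4 * EN + (\<Sum>l<nat j - 2. \<bar>x l - 2 * x (Suc l) + x (Suc (Suc l))\<bar>)"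
    by (rule alt_bound[OF M EN_nonneg]) auto
  have D: "\<bar>x l - 2 * x (Suc l) + x (Suc (Suc l))\<bar> \<le> (if win W j (int l) then 2 * FN * K1 else 257 * EN)"
    if l: "l < nat j" for l
  proof -
    let ?a = "j - int l" and ?b = "j + int l"
    let ?r1 = "sN N (real_of_int ?a - 1) * sN N (real_of_int ?b + 1)"
    let ?r2 = "sN N (real_of_int ?a - 2) * sN N (real_of_int ?b + 2)"
    have x1: "x (Suc l) = x l * ?r1"
    proof -
      have "x (Suc l) = QQ N (?a - 1) (?b + 1)" unfolding x_def by (simp add: algebra_simps)
      also have "\<dots> = sN N (of_int (?a - 1)) * QQ N ?a ?b * sN N (of_int (?b + 1))"
        by (rule QQ_step) simp
      finally show ?thesis unfolding x_def by (simp add: mult_ac)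
    qed
    have x2: "x (Suc (Suc l)) = x (Suc l) * ?r2"
    proof -
      have "x (Suc (Suc l)) = QQ N ((?a - 1) - 1) ((?b + 1) + 1)" unfolding x_def by (simp add: algebra_simps)
      also have "\<dots> = sN N (of_int (?a - 1 - 1)) * QQ N (?a - 1) (?b + 1) * sN N (of_int (?b + 1 + 1))"
        by (rule QQ_step) simp
      also have "QQ N (?a - 1) (?b + 1) = x (Suc l)" unfolding x_def by (simp add: algebra_simps)
      finally show ?thesis by (simp add: mult_ac algebra_simps)
    qed
    have id: "x l - 2 * x (Suc l) + x (Suc (Suc l)) = x l * (1 - 2 * ?r1 + ?r1 * ?r2)"
      unfolding x2 x1 by (simp add: algebra_simps)
    have xl: "0 \<le> x l" "x l \<le> 2 * FN" "\<not> win W j (int l) \<Longrightarrow> x l \<le> EN" using xr[OF l] by auto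
    have "\<bar>x l - 2 * x (Suc l) + x (Suc (Suc l))\<bar> = x l * \<bar>1 - 2 * ?r1 + ?r1 * ?r2\<bar>"
      unfolding id using xl by (simp add: abs_mult)
    moreover have g: "\<bar>1 - 2 * ?r1 + ?r1 * ?r2\<bar> \<le> 257" using fac_bound(1)[of "real_of_int ?a" "real_of_int ?b"] by simp
    moreover have "win W j (int l) \<Longrightarrow> \<bar>1 - 2 * ?r1 + ?r1 * ?r2\<bar> \<le> K1"
      unfolding K1_def using W4 by (intro fac_bound(2)) (auto simp: win_def)
    ultimately have fe: "\<bar>x l - 2 * x (Suc l) + x (Suc (Suc l))\<bar> = x l * \<bar>1 - 2 * ?r1 + ?r1 * ?r2\<bar>"
      and fg: "\<bar>1 - 2 * ?r1 + ?r1 * ?r2\<bar> \<le> 257"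
      and fw: "win W j (int l) \<Longrightarrow> \<bar>1 - 2 * ?r1 + ?r1 * ?r2\<bar> \<le> K1" by auto
    show ?thesis
    proof (cases "win W j (int l)")
      case True
      have "x l * \<bar>1 - 2 * ?r1 + ?r1 * ?r2\<bar> \<le> (2 * FN) * K1"
        using xl fw[OF True] FN_pos by (intro mult_mono) auto
      then show ?thesis using True fe by simp
    next
      case False
      have "x l * \<bar>1 - 2 * ?r1 + ?r1 * ?r2\<bar> \<le> EN * 257"
        using xl(1) xl(3)[OF False] fg EN_nonneg by (intro mult_mono) auto
      then show ?thesis using False fe by simp
    qed
  qed
  have "(\<Sum>l<nat j - 2. \<bar>x l - 2 * x (Suc l) + x (Suc (Suc l))\<bar>) \<le> (\<Sum>l<nat j. \<bar>x l - 2 * x (Suc l) + x (Suc (Suc l))\<bar>)"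
    by (intro sum_mono2) auto
  also have "\<dots> \<le> 2 * FN * K1 * real (card {l. l < nat j \<and> win W j (int l)}) + 257 * EN * real (nat j)"
    by (rule sum_split_bound[OF D]) (auto intro!: mult_nonneg_nonneg EN_nonneg)
  finally show ?thesis using A unfolding e cnt_def by linarith
qed

lemma V_bound:
  "(\<Sum>l\<in>{0..j-1}. \<bar>cc N j l\<bar> * QQ N (j - l) (j + l)) \<le> (4 + 32 * pi * W) * (2 * FN) * real (cnt j) + 2 * real N ^ 3 * EN * real (nat j)"
proof -
  have e: "(\<Sum>l\<in>{0..j-1}. \<bar>cc N j l\<bar> * QQ N (j - l) (j + l)) = (\<Sum>l<nat j. \<bar>cc N j (int l)\<bar> * QQ N (j - int l) (j + int l))"
    using j by (subst sum_int_nat) auto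
  have D: "\<bar>cc N j (int l)\<bar> * QQ N (j - int l) (j + int l) \<le> (if win W j (int l) then (4 + 32 * pi * W) * (2 * FN) else 2 * real N ^ 3 * EN)"
    if l: "l < nat j" for l
  proof -
    have q: "0 \<le> QQ N (j - int l) (j + int l)" "QQ N (j - int l) (j + int l) \<le> 2 * FN"
      "\<not> win W j (int l) \<Longrightarrow> QQ N (j - int l) (j + int l) \<le> EN" using l Qb[of "int l"] Qnn[of "int l"] by auto
    have c: "\<bar>cc N j (int l)\<bar> \<le> 2 * real N ^ 3" using l j by (intro cc_crude) auto
    have cw: "win W j (int l) \<Longrightarrow> \<bar>cc N j (int l)\<bar> \<le> 4 + 32 * pi * W" using l j W4 WN by (intro cc_win) auto
    show ?thesis
    proof (cases "win W j (int l)")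
      case True then show ?thesis using q cw by (simp add: mult_mono)
    next
      case False then show ?thesis using q c by (simp add: mult_mono)
    qed
  qed
  have "(\<Sum>l<nat j. \<bar>cc N j (int l)\<bar> * QQ N (j - int l) (j + int l)) \<le> (4 + 32 * pi * W) * (2 * FN) * real (cnt j) + 2 * real N ^ 3 * EN * real (nat j)"
    unfolding cnt_def by (rule sum_split_bound[OF D]) (auto intro!: mult_nonneg_nonneg EN_nonneg)
  then show ?thesis unfolding e .
qed

end
end


lemma card_int_interval: fixes S :: "int set" assumes S: "\<And>n. n \<in> S \<Longrightarrow> x \<le> real_of_int n \<and> real_of_int n \<le> x + w"
  and w: "0 \<le> w" shows "real (card S) \<le> w + 1"
proof -
  have sub: "S \<subseteq> {\<lceil>x\<rceil>..\<lfloor>x + w\<rfloor>}"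
  proof
    fix n assume "n \<in> S"
    then have "x \<le> real_of_int n" "real_of_int n \<le> x + w" using S by auto
    then show "n \<in> {\<lceil>x\<rceil>..\<lfloor>x + w\<rfloor>}" by (simp add: ceiling_le_iff le_floor_iff)
  qed
  have "card S \<le> card {\<lceil>x\<rceil>..\<lfloor>x + w\<rfloor>}" by (rule card_mono[OF _ sub]) simp
  also have "\<dots> = nat (\<lfloor>x + w\<rfloor> - \<lceil>x\<rceil> + 1)" by simp
  finally have c: "real (card S) \<le> real (nat (\<lfloor>x + w\<rfloor> - \<lceil>x\<rceil> + 1))" by simp
  have f1: "real_of_int \<lfloor>x + w\<rfloor> \<le> x + w" by (rule of_int_floor_le)
  have f2: "x \<le> real_of_int \<lceil>x\<rceil>" by (rule le_of_int_ceiling)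
  have "real_of_int (\<lfloor>x + w\<rfloor> - \<lceil>x\<rceil> + 1) \<le> w + 1"
    using f1 f2 by (simp only: of_int_add of_int_diff of_int_1; linarith)
  moreover have "real (nat (\<lfloor>x + w\<rfloor> - \<lceil>x\<rceil> + 1)) \<le> max 0 (real_of_int (\<lfloor>x + w\<rfloor> - \<lceil>x\<rceil> + 1))" by simp
  ultimately show ?thesis using c w by linarith
qed

context bigNW begin

definition "JJ = {j::int. 1 \<le> j \<and> real_of_int j \<le> real N / 2 - 1 \<and> even (int N - j + 1)}"

lemma JJ_sub: "JJ \<subseteq> {1..int N}" unfolding JJ_def by auto

lemma JJ_fin: "finite JJ" using JJ_sub finite_subset by blast

lemma JJ_card: "real (card JJ) \<le> real N"
proof -
  have "card JJ \<le> card {1..int N}" by (rule card_mono[OF _ JJ_sub]) simp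
  then show ?thesis by simp
qed

lemma JJ_mem: "j \<in> JJ \<Longrightarrow> 1 \<le> j \<and> 2 * j \<le> int N - 2"
  unfolding JJ_def by auto

lemma cnt_le: "real (cnt j) \<le> 2 * W + 1"
proof -
  have "cnt j = card (int ` {l. l < nat j \<and> win W j (int l)})"
    unfolding cnt_def by (simp add: card_image)
  also have "real \<dots> \<le> 2 * W + 1"
  proof (rule card_int_interval[where x = "real_of_int j - real N / 6 - W" and w = "2 * W"])
    fix n assume "n \<in> int ` {l. l < nat j \<and> win W j (int l)}"
    then obtain l where "n = int l" "win W j (int l)" by auto
    then show "real_of_int j - real N / 6 - W \<le> real_of_int n \<and> real_of_int n \<le> real_of_int j - real N / 6 - W + 2 * W"
      unfolding win_def by auto
  qed (use W4 in simp)
  finally show ?thesis .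
qed

lemma cnt_zero: assumes "\<bar>2 * real_of_int j - real N\<bar> > 2 * W" shows "cnt j = 0"
proof -
  have "{l. l < nat j \<and> win W j (int l)} = {}"
  proof (rule ccontr)
    assume "{l. l < nat j \<and> win W j (int l)} \<noteq> {}"
    then obtain l where "win W j (int l)" by auto
    then show False using assms unfolding win_def by auto
  qed
  then show ?thesis unfolding cnt_def by simp
qed

lemma cnt_sum: "(\<Sum>j\<in>JJ. real (cnt j)) \<le> (2 * W + 1)^2"
proof -
  let ?A = "{j\<in>JJ. \<bar>2 * real_of_int j - real N\<bar> \<le> 2 * W}"
  have "(\<Sum>j\<in>JJ. real (cnt j)) = (\<Sum>j\<in>?A. real (cnt j))"
  proof (rule sum.mono_neutral_right)
    show "\<forall>i\<in>JJ - ?A. real (cnt i) = 0" using cnt_zero by (auto simp: not_le)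
  qed (use JJ_fin in auto)
  also have "\<dots> \<le> (\<Sum>j\<in>?A. 2 * W + 1)" by (rule sum_mono) (rule cnt_le)
  also have "\<dots> = real (card ?A) * (2 * W + 1)" by simp
  also have "real (card ?A) \<le> 2 * W + 1"
  proof (rule card_int_interval[where x = "real N / 2 - W" and w = "2 * W"])
    fix n assume "n \<in> ?A" then show "real N / 2 - W \<le> real_of_int n \<and> real_of_int n \<le> real N / 2 - W + 2 * W" by auto
  qed (use W4 in simp)
  then have "real (card ?A) * (2 * W + 1) \<le> (2 * W + 1) * (2 * W + 1)" using W4 by (intro mult_right_mono) auto
  finally show ?thesis by (simp add: power2_eq_square)
qed

lemma Ssum_bound:
  "norm (Ssum m N) \<le> (\<bar>real_of_int m\<bar> * real N / 2) * (4 * EN * real N + 2 * FN * K1 * (2 * W + 1)^2 + 257 * EN * real N ^ 2)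
     + (4 + 32 * pi * W) * (2 * FN) * (2 * W + 1)^2 + 2 * real N ^ 5 * EN"
proof -
  let ?I = "\<lambda>j. \<Sum>l\<in>{0..j-1}. qterm m N j * D1 m N j l"
  let ?a = "\<bar>real_of_int m\<bar> * real N / 2"
  have per: "norm (?I j) \<le> ?a * (4 * EN + 2 * FN * K1 * real (cnt j) + 257 * EN * real N)
      + ((4 + 32 * pi * W) * (2 * FN) * real (cnt j) + 2 * real N ^ 3 * EN * real N)" if jJ: "j \<in> JJ" for j
  proof -
    have j: "1 \<le> j" "2 * j \<le> int N - 2" using JJ_mem[OF jJ] by auto
    have nj: "real (nat j) \<le> real N" using j by linarith
    have "norm (?I j) \<le> \<bar>real_of_int m\<bar> * real_of_int j / 2 * \<bar>\<Sum>l\<in>{0..j-1}. (-1) ^ nat l * QQ N (j - l) (j + l)\<bar>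
      + (\<Sum>l\<in>{0..j-1}. \<bar>cc N j l\<bar> * QQ N (j - l) (j + l))"
      using j by (intro inner_bound[OF Npos]) auto
    also have "\<bar>real_of_int m\<bar> * real_of_int j / 2 * \<bar>\<Sum>l\<in>{0..j-1}. (-1) ^ nat l * QQ N (j - l) (j + l)\<bar>
        \<le> ?a * (4 * EN + 2 * FN * K1 * real (cnt j) + 257 * EN * real N)"
    proof (rule mult_mono)
      show "\<bar>real_of_int m\<bar> * real_of_int j / 2 \<le> ?a" using j by (intro divide_right_mono mult_left_mono) auto
      have "\<bar>\<Sum>l\<in>{0..j-1}. (-1) ^ nat l * QQ N (j - l) (j + l)\<bar> \<le> 4 * EN + 2 * FN * K1 * real (cnt j) + 257 * EN * real (nat j)"
        by (rule U_bound[OF j])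
      also have "257 * EN * real (nat j) \<le> 257 * EN * real N" using nj EN_nonneg by (intro mult_left_mono) auto
      finally show "\<bar>\<Sum>l\<in>{0..j-1}. (-1) ^ nat l * QQ N (j - l) (j + l)\<bar> \<le> 4 * EN + 2 * FN * K1 * real (cnt j) + 257 * EN * real N" by simp
    qed (use j in auto)
    also have "(\<Sum>l\<in>{0..j-1}. \<bar>cc N j l\<bar> * QQ N (j - l) (j + l))
        \<le> (4 + 32 * pi * W) * (2 * FN) * real (cnt j) + 2 * real N ^ 3 * EN * real N"
    proof -
      have "2 * real N ^ 3 * EN * real (nat j) \<le> 2 * real N ^ 3 * EN * real N" using nj EN_nonneg by (intro mult_left_mono) auto
      then show ?thesis using V_bound[OF j] by linarith
    qed
    finally show ?thesis by simp
  qed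
  have "norm (Ssum m N) \<le> (\<Sum>j\<in>JJ. norm (?I j))"
    unfolding Ssum_def JJ_def[symmetric] by (rule norm_sum)
  also have "\<dots> \<le> (\<Sum>j\<in>JJ. ?a * (4 * EN + 2 * FN * K1 * real (cnt j) + 257 * EN * real N)
      + ((4 + 32 * pi * W) * (2 * FN) * real (cnt j) + 2 * real N ^ 3 * EN * real N))"
    by (rule sum_mono) (rule per)
  also have "\<dots> = ?a * (4 * EN * real (card JJ) + 2 * FN * K1 * (\<Sum>j\<in>JJ. real (cnt j)) + 257 * EN * real N * real (card JJ))
      + ((4 + 32 * pi * W) * (2 * FN) * (\<Sum>j\<in>JJ. real (cnt j)) + 2 * real N ^ 3 * EN * real N * real (card JJ))"
    by (simp add: sum.distrib sum_distrib_left sum_distrib_right algebra_simps)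
  also have "\<dots> \<le> ?a * (4 * EN * real N + 2 * FN * K1 * (2 * W + 1)^2 + 257 * EN * real N * real N)
      + ((4 + 32 * pi * W) * (2 * FN) * (2 * W + 1)^2 + 2 * real N ^ 3 * EN * real N * real N)"
  proof -
    have c1: "real (card JJ) \<le> real N" by (rule JJ_card)
    have c2: "(\<Sum>j\<in>JJ. real (cnt j)) \<le> (2 * W + 1)^2" by (rule cnt_sum)
    have p: "0 \<le> EN" "0 < FN" "0 \<le> K1" "0 \<le> ?a" "0 \<le> 4 + 32 * pi * W" using EN_nonneg FN_pos K1_nonneg W4 by auto
    have "4 * EN * real (card JJ) \<le> 4 * EN * real N" using c1 p by (intro mult_left_mono) auto
    moreover have "2 * FN * K1 * (\<Sum>j\<in>JJ. real (cnt j)) \<le> 2 * FN * K1 * (2 * W + 1)^2" using c2 p by (intro mult_left_mono) auto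
    moreover have "257 * EN * real N * real (card JJ) \<le> 257 * EN * real N * real N" using c1 p by (intro mult_left_mono) auto
    moreover have "(4 + 32 * pi * W) * (2 * FN) * (\<Sum>j\<in>JJ. real (cnt j)) \<le> (4 + 32 * pi * W) * (2 * FN) * (2 * W + 1)^2"
      using c2 p by (intro mult_left_mono) auto
    moreover have "2 * real N ^ 3 * EN * real N * real (card JJ) \<le> 2 * real N ^ 3 * EN * real N * real N"
      using c1 p by (intro mult_left_mono) auto
    ultimately show ?thesis using p by (smt (verit) mult_left_mono)
  qed
  also have "\<dots> = ?a * (4 * EN * real N + 2 * FN * K1 * (2 * W + 1)^2 + 257 * EN * real N ^ 2)
     + (4 + 32 * pi * W) * (2 * FN) * (2 * W + 1)^2 + 2 * real N ^ 5 * EN"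
    by (simp add: power2_eq_square power3_eq_cube eval_nat_numeral)
  finally show ?thesis .
qed

end


context bigNW begin

definition "CC m = \<bar>real_of_int m\<bar> * (1296 * pi^2 + 288 * pi) + 18 * (1 + 32 * pi) + 131 * \<bar>real_of_int m\<bar> + 2"

lemma final_bound:
  assumes big: "2 * real N ^ 5 \<le> (1 + W/2 * pi / real N) ^ nat \<lfloor>W/2\<rfloor>"
  shows "norm (Ssum m N) \<le> CC m * W^3 * FN"
proof -
  have Np: "real N > 0" using Npos by simp
  have N1: "1 \<le> real N" using N12 by simp
  have W1: "1 \<le> W" using W4 by simp
  have WN': "W \<le> real N" using WN Np by simp
  have F0: "0 < FN" by (rule FN_pos)
  have E0: "0 \<le> EN" by (rule EN_nonneg)
  define P where "P = (1 + W/2 * pi / real N) ^ nat \<lfloor>W/2\<rfloor>"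
  have P0: "0 < P" unfolding P_def using W4 Np by (intro zero_less_power add_pos_nonneg) auto
  have EP: "EN * P = 2 * FN" unfolding EN_def P_def[symmetric] using P0 by simp
  have NE: "real N ^ 5 * EN \<le> FN"
  proof -
    have "2 * real N ^ 5 * EN \<le> P * EN" using big E0 unfolding P_def by (intro mult_right_mono) auto
    then show ?thesis using EP by (simp add: mult.commute)
  qed
  let ?am = "\<bar>real_of_int m\<bar>"
  have am: "0 \<le> ?am" by simp
  have W3: "1 \<le> W^3" using W1 by (simp add: one_le_power)
  have Wsq: "W^2 \<le> W^3" using W1 by (simp add: power_increasing)
  have n2: "real N ^ 2 \<le> real N ^ 5" using N1 by (intro power_increasing) auto
  have ET: "(?am * real N / 2) * (4 * EN * real N + 257 * EN * real N ^ 2) + 2 * real N ^ 5 * EN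
      \<le> (131 * ?am + 2) * W^3 * FN"
  proof -
    have e1: "(?am * real N / 2) * (4 * EN * real N + 257 * EN * real N ^ 2) = ?am * EN * (2 * real N ^ 2 + 257/2 * real N ^ 3)"
      by (simp add: algebra_simps power2_eq_square power3_eq_cube)
    have n3: "real N ^ 3 \<le> real N ^ 5" using N1 by (intro power_increasing) auto
    have "2 * real N ^ 2 + 257/2 * real N ^ 3 \<le> 131 * real N ^ 5"
      using n2 n3 zero_le_power[of "real N" 5] by linarith
    then have "?am * EN * (2 * real N ^ 2 + 257/2 * real N ^ 3) \<le> ?am * EN * (131 * real N ^ 5)"
      using am E0 by (intro mult_left_mono) auto
    also have "\<dots> = 131 * ?am * (real N ^ 5 * EN)" by (simp add: algebra_simps)
    also have "\<dots> \<le> 131 * ?am * FN" using NE am by (intro mult_left_mono) auto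
    finally have a0: "?am * EN * (2 * real N ^ 2 + 257/2 * real N ^ 3) \<le> 131 * ?am * FN" .
    have a: "(?am * real N / 2) * (4 * EN * real N + 257 * EN * real N ^ 2) \<le> 131 * ?am * FN"
      by (subst e1) (rule a0)
    have b: "2 * real N ^ 5 * EN \<le> 2 * FN" using NE by simp
    have "131 * ?am * FN + 2 * FN = (131 * ?am + 2) * 1 * FN" by (simp add: algebra_simps)
    also have "\<dots> \<le> (131 * ?am + 2) * W^3 * FN" using W3 F0 am by (intro mult_right_mono mult_left_mono) auto
    finally show ?thesis using a b by linarith
  qed
  have s1: "(2 * W + 1)^2 \<le> 9 * W^2"
  proof -
    have "(2 * W + 1)^2 \<le> (3 * W)^2" using W1 by (intro power_mono) auto
    then show ?thesis by (simp add: power_mult_distrib)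
  qed
  have NK: "real N * K1 \<le> (144 * pi^2 + 32 * pi) * W"
  proof -
    have e: "real N * K1 = 36 * pi^2 * ((W + 1)^2 / real N) + 32 * pi"
      unfolding K1_def using Np by (simp add: field_simps power2_eq_square)
    have "(W + 1)^2 \<le> (2 * W)^2" using W1 by (intro power_mono) auto
    then have "(W + 1)^2 / real N \<le> 4 * W^2 / real N" using Np by (intro divide_right_mono) (auto simp: power_mult_distrib)
    also have "4 * W^2 / real N \<le> 4 * W" using WN' Np W1 by (simp add: field_simps power2_eq_square mult_right_mono)
    finally have "(W + 1)^2 / real N \<le> 4 * W" .
    then have "36 * pi^2 * ((W + 1)^2 / real N) \<le> 36 * pi^2 * (4 * W)" by (intro mult_left_mono) auto
    moreover have "32 * pi \<le> 32 * pi * W" using W1 by simp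
    moreover have "(144 * pi^2 + 32 * pi) * W = 36 * pi^2 * (4 * W) + 32 * pi * W" by (simp add: algebra_simps)
    ultimately show ?thesis unfolding e by linarith
  qed
  have T1: "(?am * real N / 2) * (2 * FN * K1 * (2 * W + 1)^2) \<le> ?am * (1296 * pi^2 + 288 * pi) * W^3 * FN"
  proof -
    have e: "(?am * real N / 2) * (2 * FN * K1 * (2 * W + 1)^2) = ?am * FN * ((real N * K1) * (2 * W + 1)^2)"
      by (simp add: algebra_simps)
    have "(real N * K1) * (2 * W + 1)^2 \<le> ((144 * pi^2 + 32 * pi) * W) * (9 * W^2)"
      by (rule mult_mono[OF NK s1]) (use W1 in auto)
    also have "\<dots> = (1296 * pi^2 + 288 * pi) * W^3" by (simp add: algebra_simps power2_eq_square power3_eq_cube)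
    finally have "?am * FN * ((real N * K1) * (2 * W + 1)^2) \<le> ?am * FN * ((1296 * pi^2 + 288 * pi) * W^3)"
      using am F0 by (intro mult_left_mono) auto
    then show ?thesis unfolding e by (simp add: algebra_simps)
  qed
  have T2: "(4 + 32 * pi * W) * (2 * FN) * (2 * W + 1)^2 \<le> 18 * (1 + 32 * pi) * W^3 * FN"
  proof -
    have a: "4 + 32 * pi * W \<le> (1 + 32 * pi) * W" using W4 by (simp add: algebra_simps)
    have "(4 + 32 * pi * W) * (2 * W + 1)^2 \<le> ((1 + 32 * pi) * W) * (9 * W^2)"
      by (rule mult_mono[OF a s1]) (use W1 in auto)
    also have "\<dots> = 9 * (1 + 32 * pi) * W^3" by (simp add: algebra_simps power2_eq_square power3_eq_cube)
    finally have "(4 + 32 * pi * W) * (2 * W + 1)^2 * (2 * FN) \<le> 9 * (1 + 32 * pi) * W^3 * (2 * FN)"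
      using F0 by (intro mult_right_mono) auto
    then show ?thesis by (simp add: algebra_simps)
  qed
  have "norm (Ssum m N) \<le> (?am * real N / 2) * (4 * EN * real N + 2 * FN * K1 * (2 * W + 1)^2 + 257 * EN * real N ^ 2)
     + (4 + 32 * pi * W) * (2 * FN) * (2 * W + 1)^2 + 2 * real N ^ 5 * EN" by (rule Ssum_bound)
  also have "\<dots> = ((?am * real N / 2) * (4 * EN * real N + 257 * EN * real N ^ 2) + 2 * real N ^ 5 * EN)
     + (?am * real N / 2) * (2 * FN * K1 * (2 * W + 1)^2) + (4 + 32 * pi * W) * (2 * FN) * (2 * W + 1)^2"
    by (simp add: algebra_simps)
  also have "\<dots> \<le> (131 * ?am + 2) * W^3 * FN + ?am * (1296 * pi^2 + 288 * pi) * W^3 * FN + 18 * (1 + 32 * pi) * W^3 * FN"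
    using ET T1 T2 by linarith
  also have "\<dots> = CC m * W^3 * FN" unfolding CC_def by (simp add: algebra_simps)
  finally show ?thesis .
qed

end


lemma c4_lemma:
  fixes x \<alpha> :: real
  assumes x: "1 \<le> x" and a: "1/2 < \<alpha>"
    and W4: "4 \<le> x powr \<alpha>" and WN: "x powr \<alpha> \<le> x / 24"
    and y: "6 + 60 / (2*\<alpha> - 1) \<le> x powr ((2*\<alpha> - 1)/2)"
  shows "2 * x ^ 5 \<le> (1 + x powr \<alpha> / 2 * pi / x) ^ nat \<lfloor>x powr \<alpha> / 2\<rfloor>"
proof -
  define W where "W = x powr \<alpha>"
  define b where "b = 2*\<alpha> - 1"
  define t where "t = W / 2 * pi / x"
  define K where "K = nat \<lfloor>W / 2\<rfloor>"
  define yy where "yy = x powr (b/2)"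
  have xp: "0 < x" using x by simp
  have b0: "0 < b" unfolding b_def using a by simp
  have t0: "0 \<le> t" unfolding t_def W_def using xp by simp
  have th: "t \<le> 1/2"
  proof -
    have "t \<le> (x / 24) / 2 * pi / x" unfolding t_def using WN xp unfolding W_def
      by (intro divide_right_mono mult_right_mono) auto
    also have "\<dots> = pi / 48" using xp by simp
    also have "\<dots> \<le> 1/2" using pi_less_4 by simp
    finally show ?thesis .
  qed
  have L: "t / 2 \<le> ln (1 + t)"
  proof -
    have "t - t^2 \<le> ln (1 + t)" using t0 th by (intro ln_one_plus_pos_lower_bound) auto
    moreover have "t * t \<le> t * (1/2)" using t0 th by (intro mult_left_mono) auto
    then have "t^2 \<le> t / 2" by (simp add: power2_eq_square)
    ultimately show ?thesis by linarith
  qed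
  have K4: "W / 4 \<le> real K" unfolding K_def using W4 unfolding W_def by linarith
  have pK: "(1 + t) ^ K = exp (real K * ln (1 + t))"
    using t0 by (simp add: exp_ln ln_realpow[symmetric])
  have "W / 4 * (t / 2) \<le> real K * ln (1 + t)"
    using K4 L t0 W4 unfolding W_def by (intro mult_mono) auto
  moreover have "W / 4 * (t / 2) = pi / 16 * (W * W / x)" unfolding t_def by (simp add: field_simps)
  moreover have "W * W / x = yy^2"
  proof -
    have "W * W = x powr (2 * \<alpha>)" unfolding W_def by (simp add: powr_add[symmetric])
    moreover have "x powr (2 * \<alpha>) / x = x powr b" unfolding b_def using xp by (simp add: powr_diff)
    moreover have "yy^2 = x powr b" unfolding yy_def using xp by (simp add: powr_power)
    ultimately show ?thesis by simp
  qed
  moreover have "1/6 * yy^2 \<le> pi / 16 * yy^2" using pi_gt3 by (intro mult_right_mono) auto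
  ultimately have E: "exp (yy^2 / 6) \<le> (1 + t) ^ K" unfolding pK by simp
  have y1: "6 + 60 / b \<le> yy" using y unfolding yy_def b_def .
  have b60: "0 < 60 / b" using b0 by simp
  have yp: "0 < yy" using y1 b60 by linarith
  have lnx: "ln x \<le> (2 / b) * yy"
  proof -
    have "ln yy = (b/2) * ln x" unfolding yy_def by simp
    moreover have "ln yy \<le> yy - 1" using yp by (rule ln_le_minus_one)
    ultimately have "(b/2) * ln x \<le> yy" by simp
    then show ?thesis using b0 by (simp add: field_simps)
  qed
  have ln2: "ln (2::real) \<le> 1" using ln_le_minus_one[of 2] by simp
  have "ln (2 * x ^ 5) = ln 2 + 5 * ln x" using xp by (simp add: ln_mult ln_realpow)
  also have "\<dots> \<le> 1 + 5 * ((2 / b) * yy)" using ln2 lnx by simp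
  also have "\<dots> \<le> yy^2 / 6"
  proof -
    have "1 + 10 / b \<le> yy / 6"
    proof -
      have "60 / b = 6 * (10 / b)" by simp
      then show ?thesis using y1 by linarith
    qed
    then have a1: "yy * (1 + 10 / b) \<le> yy * (yy / 6)" using yp by (intro mult_left_mono) auto
    have a2: "1 \<le> yy" using y1 b60 by linarith
    have a3: "0 \<le> 10 / b" using b0 by simp
    have e1: "1 + 5 * ((2 / b) * yy) = 1 + (10 / b) * yy" by simp
    have e2: "yy * (1 + 10 / b) = yy + (10 / b) * yy" by (simp add: algebra_simps)
    have e3: "yy * (yy / 6) = yy^2 / 6" by (simp add: power2_eq_square)
    show ?thesis unfolding e1 using a1 a2 a3 e2 e3 by linarith
  qed
  finally have lle: "ln (2 * x ^ 5) \<le> yy^2 / 6" .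
  have pos: "0 < 2 * x ^ 5" using xp by simp
  have "2 * x ^ 5 = exp (ln (2 * x ^ 5))" using pos by simp
  also have "\<dots> \<le> exp (yy^2 / 6)" using lle by simp
  finally have "2 * x ^ 5 \<le> exp (yy^2 / 6)" .
  then show ?thesis using E unfolding t_def K_def W_def by simp
qed



lemma ev_powr_ge: fixes c g :: real assumes "0 < c" "0 < g"
  shows "eventually (\<lambda>N::nat. c \<le> real N powr g) at_top"
proof -
  have "eventually (\<lambda>N::nat. nat \<lceil>c powr (1/g)\<rceil> \<le> N) at_top" by (rule eventually_ge_at_top)
  then show ?thesis
  proof (rule eventually_mono)
    fix N :: nat assume "nat \<lceil>c powr (1/g)\<rceil> \<le> N"
    then have h: "c powr (1/g) \<le> real N" by linarith
    have "(c powr (1/g)) powr g \<le> real N powr g" using h assms by (intro powr_mono2) auto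
    moreover have "(c powr (1/g)) powr g = c" using assms by (simp add: powr_powr)
    ultimately show "c \<le> real N powr g" by simp
  qed
qed

theorem proposition4p2:
  fixes m :: int and \<alpha> :: real
  assumes "1/2 < \<alpha>" and "\<alpha> < 2/3"
  shows "(\<lambda>N. Ssum m N) \<in> O[at_top](\<lambda>N. complex_of_real (real N powr (3 * \<alpha>) * FF N))"
proof -
  define C where "C = \<bar>real_of_int m\<bar> * (1296 * pi^2 + 288 * pi) + 18 * (1 + 32 * pi) + 131 * \<bar>real_of_int m\<bar> + 2"
  have a0: "0 < \<alpha>" "0 < 1 - \<alpha>" "0 < (2*\<alpha> - 1)/2" using assms by auto
  have ev: "eventually (\<lambda>N::nat. 12 \<le> N \<and> 4 \<le> real N powr \<alpha> \<and> 24 \<le> real N powr (1 - \<alpha>)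
      \<and> 6 + 60 / (2*\<alpha> - 1) \<le> real N powr ((2*\<alpha> - 1)/2)) at_top"
  proof -
    have c: "0 < 6 + 60 / (2*\<alpha> - 1)" using assms by (intro add_pos_nonneg) auto
    show ?thesis
      by (intro eventually_conj eventually_ge_at_top ev_powr_ge c a0) simp_all
  qed
  show ?thesis
  proof (rule bigoI[where c = C])
    show "eventually (\<lambda>N. norm (Ssum m N) \<le> C * norm (complex_of_real (real N powr (3 * \<alpha>) * FF N))) at_top"
      using ev
    proof (rule eventually_mono)
      fix N :: nat
      assume h: "12 \<le> N \<and> 4 \<le> real N powr \<alpha> \<and> 24 \<le> real N powr (1 - \<alpha>)
          \<and> 6 + 60 / (2*\<alpha> - 1) \<le> real N powr ((2*\<alpha> - 1)/2)"
      have Np: "0 < real N" using h by simp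
      have WN: "real N powr \<alpha> \<le> real N / 24"
      proof -
        have "real N = real N powr \<alpha> * real N powr (1 - \<alpha>)" using Np by (simp add: powr_add[symmetric])
        moreover have "real N powr \<alpha> * 24 \<le> real N powr \<alpha> * real N powr (1 - \<alpha>)"
          using h by (intro mult_left_mono) auto
        ultimately show ?thesis by simp
      qed
      interpret bigNW N "real N powr \<alpha>"
        by unfold_locales (use h WN in auto)
      have big: "2 * real N ^ 5 \<le> (1 + real N powr \<alpha> / 2 * pi / real N) ^ nat \<lfloor>real N powr \<alpha> / 2\<rfloor>"
        using h WN assms by (intro c4_lemma) auto
      have FFe: "FF N = FN" unfolding FN_def using h by (intro FF_eq) auto
      have pw: "(real N powr \<alpha>)^3 = real N powr (3 * \<alpha>)" using Np by (simp add: powr_power)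
      have "norm (Ssum m N) \<le> CC m * (real N powr \<alpha>)^3 * FN" by (rule final_bound[OF big])
      also have "\<dots> = C * (real N powr (3 * \<alpha>) * FF N)" unfolding CC_def C_def FFe pw by simp
      also have "\<dots> = C * norm (complex_of_real (real N powr (3 * \<alpha>) * FF N))"
      proof -
        have nn: "0 \<le> real N powr (3 * \<alpha>) * FF N" using FN_pos FFe by simp
        have "norm (complex_of_real (real N powr (3 * \<alpha>) * FF N)) = real N powr (3 * \<alpha>) * FF N"
          by (simp only: norm_of_real abs_of_nonneg[OF nn])
        then show ?thesis by simp
      qed
      finally show "norm (Ssum m N) \<le> C * norm (complex_of_real (real N powr (3 * \<alpha>) * FF N))" .
    qed
  qed
qed


end
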